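(* Let $(\mathcal B,<)$ be a monoidal poset, $B\in\mathcal B$ and $i,j$ nodes. Then: (i) if $i\not\sim j$ and $r_ir_jB<r_iB<B$, then $r_ir_jB<r_jB<B$; (ii) if $i\not\sim j$, $B<r_iB$, $B<r_jB$ and $r_iB\ne r_jB$, then $r_ir_jB>r_iB$ and $r_ir_jB>r_jB$; (iii) if $i\sim j$, $B<r_iB$ and $B<r_jB$, then $r_iB<r_jr_iB<r_ir_jr_iB$ and $r_jB<r_ir_jB<r_jr_ir_jB$; (iv) if $i\sim j$ and $r_jr_ir_jB<r_jr_iB<r_iB<B$, then $r_jr_ir_jB<r_ir_jB<r_jB<B$; (v) if $\alpha_i\notin B^\perp\cup B$, then either $r_iB<B$ or $r_iB>B$.
   Context: Setting: $M$ is a spherical simply laced Coxeter diagram with nodes $1,\dots,n$ ($i\sim j$: distinct adjacent nodes; $i\not\sim j$ otherwise); $W$ its Weyl group with positive roots $\Phi^+$, fundamental roots $\alpha_i$, reflections $r_i$, inner product with $(\alpha_i,\alpha_i)=2$, $(\alpha_i,\alpha_j)=-1$ if $i\sim j$, $0$ otherwise; height $\mathrm{ht}(\sum a_k\alpha_k)=\sum a_k$. For a set $B$ of mutually orthogonal positive roots, $wB=\Phi^+\cap\{\pm w\beta:\beta\in B\}$, and $B^\perp$ is the set of roots orthogonal to all elements of $B$. A $W$-orbit $\mathcal B$ of such sets is admissible if for every $B\in\mathcal B$, all nodes $i\not\sim j$ and root $\gamma$ with $\gamma,\gamma-\alpha_i+\alpha_j\in B$, $r_iB=r_jB$. For $B,C\in\mathcal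 B$ write $B\prec C$ if $B\ne C$ and the minimal height of an element of $B\setminus C$ is strictly smaller than the minimal height of an element of $C\setminus B$. For admissible $\mathcal B$, the monoidal poset $(\mathcal B,<)$ is $\mathcal B$ with the partial order $<$ given by the transitive closure of $\{(B,r_jB): B\in\mathcal B,\ j\text{ a node},\ B\prec r_jB\}$; $>$ is the reverse relation. *)

theory Defs
  imports Complex_Main
begin

text \<open>Simply laced Coxeter diagram on the nodes 1..n, given by an adjacency relation adj
  (adj i j means i and j are distinct adjacent nodes). Vectors are coefficient
  functions with respect to the fundamental roots alpha_1, ..., alpha_n.\<close>

definition nodes :: "nat \<Rightarrow> nat set" where
  "nodes n = {1..n}"

definition cartan :: "(nat \<Rightarrow> nat \<Rightarrow> bool) \<Rightarrow> nat \<Rightarrow> nat \<Rightarrow> int" where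
  "cartan adj i j = (if i = j then 2 else if adj i j then -1 else 0)"

definition ip :: "nat \<Rightarrow> (nat \<Rightarrow> nat \<Rightarrow> bool) \<Rightarrow> (nat \<Rightarrow> 'a::comm_ring_1) \<Rightarrow> (nat \<Rightarrow> 'a) \<Rightarrow> 'a" where
  "ip n adj u v = (\<Sum>i\<in>nodes n. \<Sum>j\<in>nodes n. of_int (cartan adj i j) * u i * v j)"

definition spherical_simply_laced :: "nat \<Rightarrow> (nat \<Rightarrow> nat \<Rightarrow> bool) \<Rightarrow> bool" where
  "spherical_simply_laced n adj \<longleftrightarrow>
     (\<forall>i j. adj i j \<longrightarrow> i \<in> nodes n \<and> j \<in> nodes n \<and> i \<noteq> j \<and> adj j i) \<and>
     (\<forall>v :: nat \<Rightarrow> real. (\<exists>i\<in>nodes n. v i \<noteq> 0) \<longrightarrow> ip n adj v v > 0)"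

definition alpha :: "nat \<Rightarrow> nat \<Rightarrow> int" where
  "alpha i = (\<lambda>k. if k = i then 1 else 0)"

definition rfl :: "nat \<Rightarrow> (nat \<Rightarrow> nat \<Rightarrow> bool) \<Rightarrow> nat \<Rightarrow> (nat \<Rightarrow> int) \<Rightarrow> (nat \<Rightarrow> int)" where
  "rfl n adj i v = (\<lambda>k. v k - ip n adj v (alpha i) * alpha i k)"

inductive_set roots :: "nat \<Rightarrow> (nat \<Rightarrow> nat \<Rightarrow> bool) \<Rightarrow> (nat \<Rightarrow> int) set"
  for n adj where
  simple: "i \<in> nodes n \<Longrightarrow> alpha i \<in> roots n adj"
| reflect: "v \<in> roots n adj \<Longrightarrow> i \<in> nodes n \<Longrightarrow> rfl n adj i v \<in> roots n adj"

definition pos_roots :: "nat \<Rightarrow> (nat \<Rightarrow> nat \<Rightarrow> bool) \<Rightarrow> (nat \<Rightarrow> int) set" where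
  "pos_roots n adj = {v \<in> roots n adj. \<forall>k. v k \<ge> 0}"

definition ht :: "nat \<Rightarrow> (nat \<Rightarrow> int) \<Rightarrow> int" where
  "ht n v = (\<Sum>k\<in>nodes n. v k)"

definition setact :: "nat \<Rightarrow> (nat \<Rightarrow> nat \<Rightarrow> bool) \<Rightarrow> nat \<Rightarrow> (nat \<Rightarrow> int) set \<Rightarrow> (nat \<Rightarrow> int) set" where
  "setact n adj i B = {\<gamma> \<in> pos_roots n adj. \<exists>\<beta>\<in>B. \<gamma> = rfl n adj i \<beta> \<or> \<gamma> = (\<lambda>k. - rfl n adj i \<beta> k)}"

text \<open>Action of w = r_{i1} ... r_{ik} given as the word [i1,...,ik].\<close>
definition wact :: "nat \<Rightarrow> (nat \<Rightarrow> nat \<Rightarrow> bool) \<Rightarrow> nat list \<Rightarrow> (nat \<Rightarrow> int) set \<Rightarrow> (nat \<Rightarrow> int) set" where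
  "wact n adj ws B = foldr (setact n adj) ws B"

definition orth_set :: "nat \<Rightarrow> (nat \<Rightarrow> nat \<Rightarrow> bool) \<Rightarrow> (nat \<Rightarrow> int) set \<Rightarrow> bool" where
  "orth_set n adj B \<longleftrightarrow> B \<subseteq> pos_roots n adj \<and>
     (\<forall>\<beta>\<in>B. \<forall>\<beta>'\<in>B. \<beta> \<noteq> \<beta>' \<longrightarrow> ip n adj \<beta> \<beta>' = 0)"

definition W_orbit :: "nat \<Rightarrow> (nat \<Rightarrow> nat \<Rightarrow> bool) \<Rightarrow> (nat \<Rightarrow> int) set \<Rightarrow> (nat \<Rightarrow> int) set set" where
  "W_orbit n adj B0 = {wact n adj ws B0 | ws. set ws \<subseteq> nodes n}"

definition is_orbit :: "nat \<Rightarrow> (nat \<Rightarrow> nat \<Rightarrow> bool) \<Rightarrow> (nat \<Rightarrow> int) set set \<Rightarrow> bool" where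
  "is_orbit n adj \<B> \<longleftrightarrow> (\<exists>B0. orth_set n adj B0 \<and> \<B> = W_orbit n adj B0)"

text \<open>Admissibility; i \<not>\<sim> j includes i = j (where the condition is trivial).\<close>
definition admissible :: "nat \<Rightarrow> (nat \<Rightarrow> nat \<Rightarrow> bool) \<Rightarrow> (nat \<Rightarrow> int) set set \<Rightarrow> bool" where
  "admissible n adj \<B> \<longleftrightarrow>
     (\<forall>B\<in>\<B>. \<forall>i\<in>nodes n. \<forall>j\<in>nodes n. \<not> adj i j \<longrightarrow>
        (\<forall>\<gamma>\<in>roots n adj. \<gamma> \<in> B \<and> (\<lambda>k. \<gamma> k - alpha i k + alpha j k) \<in> B \<longrightarrow>
            setact n adj i B = setact n adj j B))"

definition prec :: "nat \<Rightarrow> (nat \<Rightarrow> int) set \<Rightarrow> (nat \<Rightarrow> int) set \<Rightarrow> bool" where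
  "prec n B C \<longleftrightarrow> B \<noteq> C \<and> Min (ht n ` (B - C)) < Min (ht n ` (C - B))"

text \<open>The order < of the monoidal poset: transitive closure of B \<rightarrow> r_j B with B \<prec> r_j B.\<close>
definition mless :: "nat \<Rightarrow> (nat \<Rightarrow> nat \<Rightarrow> bool) \<Rightarrow> (nat \<Rightarrow> int) set set \<Rightarrow>
    (nat \<Rightarrow> int) set \<Rightarrow> (nat \<Rightarrow> int) set \<Rightarrow> bool" where
  "mless n adj \<B> B C \<longleftrightarrow>
     (B, C) \<in> {(B', setact n adj j B') | B' j. B' \<in> \<B> \<and> j \<in> nodes n \<and> prec n B' (setact n adj j B')}\<^sup>+"

definition perp :: "nat \<Rightarrow> (nat \<Rightarrow> nat \<Rightarrow> bool) \<Rightarrow> (nat \<Rightarrow> int) set \<Rightarrow> (nat \<Rightarrow> int) set" where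
  "perp n adj B = {\<gamma> \<in> roots n adj. \<forall>\<beta>\<in>B. ip n adj \<gamma> \<beta> = 0}"

end

theory Submission
  imports Defs
begin

lemma ip_add1: "ip n adj (\<lambda>k. u k + v k) w = ip n adj u w + ip n adj v w"
  by (simp add: ip_def algebra_simps sum.distrib)
lemma ip_diff1: "ip n adj (\<lambda>k. u k - v k) w = ip n adj u w - ip n adj v w"
  by (simp add: ip_def algebra_simps sum_subtractf)
lemma ip_neg1: "ip n adj (\<lambda>k. - u k) w = - ip n adj u w"
  by (simp add: ip_def sum_negf)
lemma ip_smult1: "ip n adj (\<lambda>k. c * u k) w = c * ip n adj u w"
  by (simp add: ip_def sum_distrib_left algebra_simps)
lemma ip_add2: "ip n adj w (\<lambda>k. u k + v k) = ip n adj w u + ip n adj w v"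
  by (simp add: ip_def algebra_simps sum.distrib)
lemma ip_diff2: "ip n adj w (\<lambda>k. u k - v k) = ip n adj w u - ip n adj w v"
  by (simp add: ip_def algebra_simps sum_subtractf)
lemma ip_neg2: "ip n adj w (\<lambda>k. - u k) = - ip n adj w u"
  by (simp add: ip_def sum_negf)
lemma ip_smult2: "ip n adj w (\<lambda>k. c * u k) = c * ip n adj w u"
  by (simp add: ip_def sum_distrib_left algebra_simps)
lemma ip_zero1: "ip n adj (\<lambda>k. 0) w = 0" by (simp add: ip_def)
lemma ip_zero2: "ip n adj w (\<lambda>k. 0) = 0" by (simp add: ip_def)

lemmas ip_lin = ip_add1 ip_diff1 ip_neg1 ip_smult1 ip_add2 ip_diff2 ip_neg2 ip_smult2

lemma ip_sum1: "ip n adj (\<lambda>k. \<Sum>s\<in>F. f s * s k) w = (\<Sum>s\<in>F. f s * ip n adj s w)"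
  unfolding ip_def
  by (simp add: sum_distrib_left sum_distrib_right algebra_simps sum.swap[of _ F])

lemma ip_sum2: "ip n adj w (\<lambda>k. \<Sum>s\<in>F. f s * s k) = (\<Sum>s\<in>F. f s * ip n adj w s)"
  unfolding ip_def
  by (simp add: sum_distrib_left sum_distrib_right algebra_simps sum.swap[of _ F])

locale ssl =
  fixes n :: nat and adj :: "nat \<Rightarrow> nat \<Rightarrow> bool"
  assumes M: "spherical_simply_laced n adj"
begin

abbreviation "N \<equiv> nodes n"
abbreviation ipv :: "(nat \<Rightarrow> int) \<Rightarrow> (nat \<Rightarrow> int) \<Rightarrow> int" where "ipv \<equiv> ip n adj"

lemma adj_sym: "adj i j \<Longrightarrow> adj j i" using M unfolding spherical_simply_laced_def by blast
lemma adj_nodes: "adj i j \<Longrightarrow> i \<in> N \<and> j \<in> N \<and> i \<noteq> j" using M unfolding spherical_simply_laced_def by blast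
lemma cartan_sym: "cartan adj i j = cartan adj j i"
  unfolding cartan_def using adj_sym by auto

lemma ip_sym: "ipv u v = ipv v u"
  unfolding ip_def
  by (subst sum.swap) (simp add: cartan_sym algebra_simps)

lemma fin_N[simp]: "finite N" by (simp add: nodes_def)

lemma ip_alpha2: "j \<in> N \<Longrightarrow> ipv u (alpha j) = (\<Sum>i\<in>N. of_int (cartan adj i j) * u i)"
  unfolding ip_def alpha_def
  by (simp add: if_distrib cong: if_cong)

lemma ip_alpha_alpha: "i \<in> N \<Longrightarrow> j \<in> N \<Longrightarrow> ipv (alpha i) (alpha j) = cartan adj i j"
  by (simp add: ip_alpha2) (simp add: alpha_def if_distrib cong: if_cong)

lemma ip_alpha_self: "i \<in> N \<Longrightarrow> ipv (alpha i) (alpha i) = 2"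
  by (simp add: ip_alpha_alpha cartan_def)

end


context ssl begin

definition supp_ok :: "(nat \<Rightarrow> int) \<Rightarrow> bool" where
  "supp_ok v \<longleftrightarrow> (\<forall>k. k \<notin> N \<longrightarrow> v k = 0)"

lemma supp_alpha: "i \<in> N \<Longrightarrow> supp_ok (alpha i)" by (auto simp: supp_ok_def alpha_def)
lemma supp_add: "supp_ok u \<Longrightarrow> supp_ok v \<Longrightarrow> supp_ok (\<lambda>k. u k + v k)" by (auto simp: supp_ok_def)
lemma supp_diff: "supp_ok u \<Longrightarrow> supp_ok v \<Longrightarrow> supp_ok (\<lambda>k. u k - v k)" by (auto simp: supp_ok_def)
lemma supp_neg: "supp_ok u \<Longrightarrow> supp_ok (\<lambda>k. - u k)" by (auto simp: supp_ok_def)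
lemma supp_smult: "supp_ok u \<Longrightarrow> supp_ok (\<lambda>k. c * u k)" by (auto simp: supp_ok_def)

lemma posdef: assumes "supp_ok v" "\<exists>k. v k \<noteq> 0" shows "ipv v v > 0"
proof -
  from assms obtain k where k: "k \<in> N" "v k \<noteq> 0" unfolding supp_ok_def by blast
  let ?w = "\<lambda>k. real_of_int (v k)"
  have "\<forall>w::nat\<Rightarrow>real. (\<exists>i\<in>N. w i \<noteq> 0) \<longrightarrow> ip n adj w w > 0"
    using M unfolding spherical_simply_laced_def by blast
  then have "(\<exists>i\<in>N. ?w i \<noteq> 0) \<longrightarrow> ip n adj ?w ?w > 0" by (rule spec)
  then have "ip n adj ?w ?w > 0" using k by auto
  moreover have "ip n adj ?w ?w = real_of_int (ipv v v)"
    unfolding ip_def by simp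
  ultimately show ?thesis by simp
qed

lemma ip_even: "ipv v v = 2 * ((\<Sum>i\<in>N. v i * v i) - (\<Sum>i\<in>N. \<Sum>j\<in>N. if adj i j \<and> i < j then v i * v j else 0))"
proof -
  let ?A = "\<Sum>i\<in>N. \<Sum>j\<in>N. if adj i j \<and> i < j then v i * v j else 0"
  let ?A' = "\<Sum>i\<in>N. \<Sum>j\<in>N. if adj i j \<and> j < i then v i * v j else 0"
  have c: "of_int (cartan adj i j) * v i * v j =
      (if i = j then 2 * (v i * v j) else 0) - (if adj i j \<and> i < j then v i * v j else 0)
       - (if adj i j \<and> j < i then v i * v j else 0)" for i j
    using adj_nodes[of i j] by (auto simp: cartan_def)
  have "ipv v v = (\<Sum>i\<in>N. \<Sum>j\<in>N. (if i = j then 2 * (v i * v j) else 0)) - ?A - ?A'"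
    unfolding ip_def c by (simp add: sum_subtractf)
  also have "(\<Sum>i\<in>N. \<Sum>j\<in>N. (if i = j then 2 * (v i * v j) else 0)) = 2 * (\<Sum>i\<in>N. v i * v i)"
    by (simp add: sum_distrib_left)
  also have "?A' = ?A"
    by (subst sum.swap) (auto intro!: sum.cong simp: adj_sym mult.commute)
  finally show ?thesis by simp
qed

lemma ip_ge2: assumes "supp_ok v" "\<exists>k. v k \<noteq> 0" shows "ipv v v \<ge> 2"
proof -
  obtain X where "ipv v v = 2 * X" using ip_even[of v] by blast
  then show ?thesis using posdef[OF assms] by presburger
qed

lemma ip_nonneg: assumes "supp_ok v" shows "ipv v v \<ge> 0"
proof (cases "\<exists>k. v k \<noteq> 0")
  case True then show ?thesis using ip_ge2[OF assms] by simp
next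
  case False then have "v = (\<lambda>k. 0)" by auto
  then show ?thesis by (simp add: ip_def)
qed

lemma ip_zero_imp: assumes "supp_ok v" "ipv v v = 0" shows "v = (\<lambda>k. 0)"
  using ip_ge2[OF assms(1)] assms(2) by fastforce

lemma norm2_sign: assumes "supp_ok v" "ipv v v = 2"
  shows "(\<forall>k. 0 \<le> v k) \<or> (\<forall>k. v k \<le> 0)"
proof (rule ccontr)
  assume na: "\<not> ?thesis"
  define p where "p = (\<lambda>k. max (v k) 0)"
  define m where "m = (\<lambda>k. max (- v k) 0)"
  have vpm: "v = (\<lambda>k. p k - m k)" unfolding p_def m_def by auto
  have sp: "supp_ok p" "supp_ok m" using assms(1) by (auto simp: supp_ok_def p_def m_def)
  from na obtain k1 k2 where "v k1 < 0" "v k2 > 0" by (meson not_le)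
  then have "p k2 \<noteq> 0" "m k1 \<noteq> 0" by (auto simp: p_def m_def)
  then have pp: "ipv p p \<ge> 2" and mm: "ipv m m \<ge> 2" using ip_ge2 sp by blast+
  have pm: "ipv p m \<le> 0"
    unfolding ip_def
  proof (intro sum_nonpos)
    fix i j
    show "of_int (cartan adj i j) * p i * m j \<le> 0"
    proof (cases "i = j")
      case True then show ?thesis by (simp add: p_def m_def)
    next
      case False
      have "p i * m j \<ge> 0" by (simp add: p_def m_def)
      moreover have "cartan adj i j \<le> 0" using False by (simp add: cartan_def)
      ultimately show ?thesis by (simp add: mult_nonpos_nonneg mult.assoc)
    qed
  qed
  have "ipv v v = ipv p p + ipv m m - 2 * ipv p m"
    by (subst vpm, subst vpm) (simp add: ip_lin ip_sym[of m p])
  then show False using pp mm pm assms(2) by linarith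
qed

lemma ht_pos: assumes "supp_ok v" "\<forall>k. 0 \<le> v k" "\<exists>k. v k \<noteq> 0" shows "ht n v > 0"
proof -
  from assms obtain k where k: "k \<in> N" "v k \<noteq> 0" unfolding supp_ok_def by blast
  have "ht n v = (\<Sum>i\<in>N. v i)" by (simp add: ht_def)
  also have "\<dots> \<ge> v k" using k assms(2) by (intro member_le_sum) auto
  finally show ?thesis using k assms(2) by (metis order.not_eq_order_implies_strict order.strict_trans2)
qed

lemma norm2_ht: assumes "supp_ok v" "ipv v v = 2" shows "ht n v \<noteq> 0"
proof -
  have nz: "\<exists>k. v k \<noteq> 0" using assms(2) by (rule_tac ccontr) (simp add: ip_def)
  from norm2_sign[OF assms] show ?thesis
  proof
    assume "\<forall>k. 0 \<le> v k" then show ?thesis using ht_pos[OF assms(1) _ nz] by simp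
  next
    assume a: "\<forall>k. v k \<le> 0"
    have "ht n (\<lambda>k. - v k) > 0" using ht_pos[OF supp_neg[OF assms(1)]] a nz by auto
    then show ?thesis by (simp add: ht_def sum_negf)
  qed
qed

lemma ht_lin: "ht n (\<lambda>k. u k + v k) = ht n u + ht n v" "ht n (\<lambda>k. u k - v k) = ht n u - ht n v"
  "ht n (\<lambda>k. - u k) = - ht n u" "ht n (\<lambda>k. c * u k) = c * ht n u"
  by (auto simp: ht_def sum.distrib sum_subtractf sum_negf sum_distrib_left)

lemma ht_alpha: "i \<in> N \<Longrightarrow> ht n (alpha i) = 1"
  by (simp add: ht_def alpha_def)

end


context ssl begin

abbreviation "rf \<equiv> rfl n adj"
abbreviation "R \<equiv> roots n adj"
abbreviation "P \<equiv> pos_roots n adj"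

lemma rf_def': "rf i v = (\<lambda>k. v k - ipv v (alpha i) * alpha i k)"
  by (simp add: rfl_def)

lemma ip_rfl: assumes "i \<in> N" shows "ipv (rf i u) (rf i v) = ipv u v"
proof -
  have s1: "ipv (alpha i) u = ipv u (alpha i)" "ipv (alpha i) v = ipv v (alpha i)" by (rule ip_sym)+
  show ?thesis unfolding rf_def'
    by (simp add: ip_lin s1 ip_alpha_self[OF assms])
qed

lemma ip_rfl_alpha: assumes "i \<in> N" "j \<in> N"
  shows "ipv (rf i v) (alpha j) = ipv v (alpha j) - ipv v (alpha i) * cartan adj i j"
  unfolding rf_def' using ip_alpha_alpha[OF assms] by (simp add: ip_lin)

lemma ip_rfl_self: assumes "i \<in> N" shows "ipv (rf i v) (alpha i) = - ipv v (alpha i)"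
  using ip_rfl_alpha[OF assms assms] by (simp add: cartan_def)

lemma rfl_rfl: assumes "i \<in> N" shows "rf i (rf i v) = v"
proof -
  have "rf i (rf i v) = (\<lambda>k. rf i v k - ipv (rf i v) (alpha i) * alpha i k)" by (rule rf_def')
  also have "\<dots> = v" unfolding ip_rfl_self[OF assms] by (simp add: rf_def')
  finally show ?thesis .
qed

lemma ht_rfl: assumes "i \<in> N" shows "ht n (rf i v) = ht n v - ipv v (alpha i)"
  unfolding rf_def' by (simp add: ht_lin ht_alpha[OF assms])

lemma supp_rfl: "i \<in> N \<Longrightarrow> supp_ok v \<Longrightarrow> supp_ok (rf i v)"
  unfolding rf_def' by (intro supp_diff supp_smult supp_alpha)

lemma rf_neg: "rf i (\<lambda>k. - v k) = (\<lambda>k. - rf i v k)"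
  by (rule ext) (simp add: rf_def' ip_neg1)

lemma alpha_root: "i \<in> N \<Longrightarrow> alpha i \<in> R" by (rule roots.simple)
lemma rf_root: "v \<in> R \<Longrightarrow> i \<in> N \<Longrightarrow> rf i v \<in> R" by (rule roots.reflect)

lemma roots_props: "v \<in> R \<Longrightarrow> supp_ok v \<and> ipv v v = 2"
proof (induction rule: roots.induct)
  case (simple i) then show ?case using supp_alpha ip_alpha_self by blast
next
  case (reflect v i) then show ?case using supp_rfl ip_rfl by simp
qed

lemma roots_supp: "v \<in> R \<Longrightarrow> supp_ok v" using roots_props by blast
lemma roots_norm: "v \<in> R \<Longrightarrow> ipv v v = 2" using roots_props by blast

lemma roots_neg: "v \<in> R \<Longrightarrow> (\<lambda>k. - v k) \<in> R"
proof (induction rule: roots.induct)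
  case (simple i)
  have "rf i (alpha i) = (\<lambda>k. - alpha i k)" unfolding rf_def' using ip_alpha_self[OF simple] by auto
  then show ?case using rf_root[OF alpha_root[OF simple] simple] by simp
next
  case (reflect v i) then show ?case using rf_root[OF reflect.IH reflect.hyps(2)] rf_neg by simp
qed

lemma root_sign: "v \<in> R \<Longrightarrow> (\<forall>k. 0 \<le> v k) \<or> (\<forall>k. v k \<le> 0)"
  using norm2_sign roots_props by blast

lemma root_nz: "v \<in> R \<Longrightarrow> \<exists>k. v k \<noteq> 0"
  using roots_norm[of v] by (rule_tac ccontr) (simp add: ip_def)


lemma pos_roots_iff: "v \<in> P \<longleftrightarrow> v \<in> R \<and> (\<forall>k. 0 \<le> v k)"
  by (simp add: pos_roots_def)

definition pn :: "(nat \<Rightarrow> int) \<Rightarrow> (nat \<Rightarrow> int)" where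
  "pn v = (if \<forall>k. 0 \<le> v k then v else (\<lambda>k. - v k))"

lemma pn_root: "v \<in> R \<Longrightarrow> pn v \<in> P"
  using root_sign[of v] roots_neg[of v] by (auto simp: pn_def pos_roots_iff)

lemma pn_pos: "v \<in> P \<Longrightarrow> pn v = v" by (simp add: pn_def pos_roots_iff)

lemma pn_neg: assumes "v \<in> R" shows "pn (\<lambda>k. - v k) = pn v"
proof -
  obtain k where k: "v k \<noteq> 0" using root_nz[OF assms] by blast
  show ?thesis
  proof (cases "\<forall>k. 0 \<le> v k")
    case True
    have "\<not> (\<forall>k. v k \<le> 0)"
    proof
      assume "\<forall>k. v k \<le> 0"
      then have "0 \<le> - v k" by simp
      with True[rule_format, of k] k show False by simp
    qed
    then have "pn (\<lambda>k. - v k) = v" unfolding pn_def by auto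
    then show ?thesis using True by (simp add: pn_def)
  next
    case False
    then have "\<forall>k. 0 \<le> - v k" using root_sign[OF assms] by auto
    then show ?thesis using False unfolding pn_def by auto
  qed
qed

lemma pn_cases: "pn v = v \<or> pn v = (\<lambda>k. - v k)" by (simp add: pn_def)

definition fi :: "nat \<Rightarrow> (nat \<Rightarrow> int) \<Rightarrow> (nat \<Rightarrow> int)" where
  "fi i v = pn (rf i v)"

lemma fi_pos: "v \<in> R \<Longrightarrow> i \<in> N \<Longrightarrow> fi i v \<in> P"
  unfolding fi_def by (intro pn_root rf_root)

lemma pos_root: "v \<in> P \<Longrightarrow> v \<in> R" by (simp add: pos_roots_iff)

lemma pn_rf_pn: assumes "w \<in> R" "i \<in> N" shows "pn (rf i (pn w)) = pn (rf i w)"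
  using pn_cases[of w]
proof
  assume "pn w = (\<lambda>k. - w k)"
  then show ?thesis using pn_neg[OF rf_root[OF assms]] by (simp add: rf_neg)
qed simp

lemma fi_fi: assumes "v \<in> P" "i \<in> N" shows "fi i (fi i v) = v"
  unfolding fi_def using pn_rf_pn[OF rf_root[OF pos_root[OF assms(1)] assms(2)] assms(2)]
  by (simp add: rfl_rfl[OF assms(2)] pn_pos[OF assms(1)])

lemma setact_eq: assumes "B \<subseteq> R" "i \<in> N" shows "setact n adj i B = fi i ` B"
proof (intro set_eqI iffI)
  fix g assume "g \<in> setact n adj i B"
  then obtain b where b: "b \<in> B" "g \<in> P" "g = rf i b \<or> g = (\<lambda>k. - rf i b k)"
    unfolding setact_def by blast
  have r: "rf i b \<in> R" using b(1) assms by (intro rf_root) auto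
  have "fi i b = g"
    using b(3)
  proof
    assume "g = rf i b" then show ?thesis using b(2) by (simp add: fi_def pn_pos)
  next
    assume g: "g = (\<lambda>k. - rf i b k)"
    have "pn g = g" using b(2) by (simp add: pn_pos)
    then show ?thesis using pn_neg[OF r] g by (simp add: fi_def)
  qed
  then show "g \<in> fi i ` B" using b(1) by blast
next
  fix g assume "g \<in> fi i ` B"
  then obtain b where b: "b \<in> B" "g = fi i b" by blast
  have bR: "b \<in> R" using b(1) assms(1) by blast
  have "g \<in> P" unfolding b(2) by (rule fi_pos[OF bR assms(2)])
  moreover have "g = rf i b \<or> g = (\<lambda>k. - rf i b k)" using pn_cases[of "rf i b"] unfolding b(2) fi_def .
  ultimately show "g \<in> setact n adj i B" using b(1) unfolding setact_def by blast
qed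

end


context ssl begin

lemma ip_le1: assumes "b \<in> R" "g \<in> R" "b \<noteq> g" shows "ipv b g \<le> 1"
proof -
  have s: "supp_ok (\<lambda>k. b k - g k)" using assms by (intro supp_diff roots_supp)
  have nz: "\<exists>k. b k - g k \<noteq> 0" using assms(3) by (metis eq_iff_diff_eq_0 ext)
  have "ipv (\<lambda>k. b k - g k) (\<lambda>k. b k - g k) = 4 - 2 * ipv b g"
    using roots_norm[OF assms(1)] roots_norm[OF assms(2)] ip_sym[of g b] by (simp add: ip_lin)
  with ip_ge2[OF s nz] show ?thesis by linarith
qed

lemma ip_ge_m1: assumes "b \<in> R" "g \<in> R" "b \<noteq> (\<lambda>k. - g k)" shows "ipv b g \<ge> -1"
proof -
  have "ipv b (\<lambda>k. - g k) \<le> 1" using ip_le1[OF assms(1) roots_neg[OF assms(2)] assms(3)] .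
  then show ?thesis by (simp add: ip_lin)
qed

lemma pos_ne_neg: assumes "b \<in> P" "g \<in> P" shows "b \<noteq> (\<lambda>k. - g k)"
proof
  assume e: "b = (\<lambda>k. - g k)"
  obtain k where k: "g k \<noteq> 0" using root_nz[OF pos_root[OF assms(2)]] by blast
  have "0 \<le> g k" "0 \<le> b k" using assms by (auto simp: pos_roots_iff)
  moreover have "b k = - g k" using e by simp
  ultimately show False using k by linarith
qed

lemma alpha_pos: assumes "i \<in> N" shows "alpha i \<in> P"
proof -
  have "\<forall>k. 0 \<le> alpha i k" by (simp add: alpha_def)
  then show ?thesis using alpha_root[OF assms] by (simp add: pos_roots_iff)
qed

lemma ip_alpha_2: assumes "b \<in> P" "i \<in> N" "ipv b (alpha i) = 2" shows "b = alpha i"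
proof -
  have s: "supp_ok (\<lambda>k. b k - alpha i k)" using assms by (intro supp_diff roots_supp supp_alpha pos_root)
  have "ipv (\<lambda>k. b k - alpha i k) (\<lambda>k. b k - alpha i k) = 0"
    using roots_norm[OF pos_root[OF assms(1)]] ip_alpha_self[OF assms(2)] ip_sym[of "alpha i" b] assms(3)
    by (simp add: ip_lin)
  from ip_zero_imp[OF s this] have "\<forall>k. b k - alpha i k = 0" by (simp add: fun_eq_iff)
  then show ?thesis by (simp add: fun_eq_iff)
qed

lemma ip_alpha_range: assumes "b \<in> P" "i \<in> N"
  shows "ipv b (alpha i) \<in> {-1,0,1,2}" "ipv b (alpha i) = 2 \<longleftrightarrow> b = alpha i"
proof -
  have ge: "ipv b (alpha i) \<ge> -1"
    using ip_ge_m1[OF pos_root[OF assms(1)] alpha_root[OF assms(2)] pos_ne_neg[OF assms(1) alpha_pos[OF assms(2)]]] .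
  show "ipv b (alpha i) = 2 \<longleftrightarrow> b = alpha i" using ip_alpha_2[OF assms] ip_alpha_self[OF assms(2)] by blast
  show "ipv b (alpha i) \<in> {-1,0,1,2}"
  proof (cases "b = alpha i")
    case True then show ?thesis using ip_alpha_self[OF assms(2)] by simp
  next
    case False
    have "ipv b (alpha i) \<le> 1" using ip_le1[OF pos_root[OF assms(1)] alpha_root[OF assms(2)] False] .
    with ge show ?thesis by auto
  qed
qed

lemma pos_other_coord: assumes "b \<in> P" "i \<in> N" "b \<noteq> alpha i" shows "\<exists>k. k \<noteq> i \<and> b k > 0"
proof (rule ccontr)
  assume na: "\<not> ?thesis"
  have nn: "\<forall>k. 0 \<le> b k" using assms(1) by (simp add: pos_roots_iff)
  have z: "\<forall>k. k \<noteq> i \<longrightarrow> b k = 0"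
  proof (intro allI impI)
    fix k assume "k \<noteq> i"
    then have "\<not> b k > 0" using na by blast
    then show "b k = 0" using nn[rule_format, of k] by linarith
  qed
  then have e: "b = (\<lambda>k. b i * alpha i k)" by (auto simp: alpha_def fun_eq_iff)
  have "ipv b b = b i * b i * 2"
    by (subst (1 2) e) (simp add: ip_lin ip_alpha_self[OF assms(2)])
  then have "b i * b i = 1" using roots_norm[OF pos_root[OF assms(1)]] by simp
  then have "b i = 1 \<or> b i = -1" using zmult_eq_1_iff by simp
  then have "b i = 1" using nn[rule_format, of i] by linarith
  then have "b = alpha i" using e by simp
  with assms(3) show False by simp
qed

lemma fi_eq: assumes "b \<in> P" "i \<in> N" shows "fi i b = (if b = alpha i then alpha i else rf i b)"
proof (cases "b = alpha i")
  case True
  have "rf i (alpha i) = (\<lambda>k. - alpha i k)" unfolding rf_def' using ip_alpha_self[OF assms(2)] by (simp add: fun_eq_iff)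
  then show ?thesis using True pn_neg[OF alpha_root[OF assms(2)]] pn_pos[OF alpha_pos[OF assms(2)]]
    by (simp add: fi_def)
next
  case False
  obtain k where k: "k \<noteq> i" "b k > 0" using pos_other_coord[OF assms False] by blast
  have "rf i b k = b k" using k(1) by (simp add: rf_def' alpha_def)
  then have "\<not> (\<forall>k. rf i b k \<le> 0)" using k(2) by (metis not_le)
  then have "\<forall>k. 0 \<le> rf i b k" using root_sign[OF rf_root[OF pos_root[OF assms(1)] assms(2)]] by blast
  then show ?thesis using False by (simp add: fi_def pn_def)
qed

lemma fi_alpha_coord: assumes "b \<in> P" "i \<in> N" "j \<in> N"
  shows "ipv (fi i b) (alpha j) = (if ipv b (alpha i) = 2 then ipv b (alpha j)
           else ipv b (alpha j) - ipv b (alpha i) * cartan adj i j)"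
  using fi_eq[OF assms(1,2)] ip_alpha_range(2)[OF assms(1,2)] ip_rfl_alpha[OF assms(2,3)] by auto

lemma fi_ht: assumes "b \<in> P" "i \<in> N"
  shows "ht n (fi i b) = (if ipv b (alpha i) = 2 then ht n b else ht n b - ipv b (alpha i))"
  using fi_eq[OF assms(1,2)] ip_alpha_range(2)[OF assms(1,2)] ht_rfl[OF assms(2)] by auto

lemma ip_pn: assumes "u \<in> R" "v \<in> R" shows "ipv (pn u) (pn v) = 0 \<longleftrightarrow> ipv u v = 0"
  using pn_cases[of u] pn_cases[of v] by (auto simp: ip_lin)

lemma fi_orth: assumes "b \<in> R" "g \<in> R" "i \<in> N" shows "ipv (fi i b) (fi i g) = 0 \<longleftrightarrow> ipv b g = 0"
  unfolding fi_def using ip_pn[OF rf_root[OF assms(1,3)] rf_root[OF assms(2,3)]] ip_rfl[OF assms(3)] by simp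

lemma fi_inj: assumes "i \<in> N" shows "inj_on (fi i) P"
  by (metis fi_fi[OF _ assms] inj_onI)

lemma rf_comm: assumes "i \<in> N" "j \<in> N" "\<not> adj i j" "i \<noteq> j"
  shows "rf i (rf j v) = rf j (rf i v)"
proof -
  have c: "cartan adj j i = 0" "cartan adj i j = 0" using assms adj_sym by (auto simp: cartan_def)
  show ?thesis
    by (rule ext) (simp add: rf_def' ip_lin ip_alpha_alpha[OF assms(1,2)] ip_alpha_alpha[OF assms(2,1)] c)
qed

lemma rf_braid: assumes "i \<in> N" "j \<in> N" "adj i j"
  shows "rf i (rf j (rf i v)) = rf j (rf i (rf j v))"
proof -
  have c: "cartan adj j i = -1" "cartan adj i j = -1" using assms adj_sym adj_nodes by (auto simp: cartan_def)
  show ?thesis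
    apply (rule ext)
    apply (simp add: rf_def' ip_lin ip_alpha_alpha[OF assms(1,2)] ip_alpha_alpha[OF assms(2,1)] c
        ip_alpha_self[OF assms(1)] ip_alpha_self[OF assms(2)])
    apply (simp add: algebra_simps)
    done
qed

lemma fi2: assumes "b \<in> R" "i \<in> N" "j \<in> N" shows "fi i (fi j b) = pn (rf i (rf j b))"
  unfolding fi_def using pn_rf_pn[OF rf_root[OF assms(1,3)] assms(2)] .

lemma fi3: assumes "b \<in> R" "i \<in> N" "j \<in> N" shows "fi i (fi j (fi i b)) = pn (rf i (rf j (rf i b)))"
proof -
  have "fi i (fi j (fi i b)) = fi i (pn (rf j (rf i b)))" using fi2[OF assms(1,3,2)] by simp
  also have "\<dots> = pn (rf i (rf j (rf i b)))" unfolding fi_def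
    using pn_rf_pn[OF rf_root[OF rf_root[OF assms(1,2)] assms(3)] assms(2)] .
  finally show ?thesis .
qed

lemma fi_comm: assumes "b \<in> R" "i \<in> N" "j \<in> N" "\<not> adj i j" "i \<noteq> j"
  shows "fi i (fi j b) = fi j (fi i b)"
  using fi2[OF assms(1,2,3)] fi2[OF assms(1,3,2)] rf_comm[OF assms(2-5)] by simp

lemma fi_braid: assumes "b \<in> R" "i \<in> N" "j \<in> N" "adj i j"
  shows "fi i (fi j (fi i b)) = fi j (fi i (fi j b))"
  using fi3[OF assms(1,2,3)] fi3[OF assms(1,3,2)] rf_braid[OF assms(2-4)] by simp

end


context ssl begin

lemma supp_sum: "(\<And>s. s \<in> F \<Longrightarrow> supp_ok s) \<Longrightarrow> supp_ok (\<lambda>k. \<Sum>s\<in>F. f s * s k)"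
  unfolding supp_ok_def by (auto intro!: sum.neutral)

lemma orth_sum_collapse:
  assumes "finite F" "s \<in> F" "F \<subseteq> R" "\<And>a b. a \<in> F \<Longrightarrow> b \<in> F \<Longrightarrow> a \<noteq> b \<Longrightarrow> ipv a b = 0"
  shows "(\<Sum>t\<in>F. c t * ipv s t) = 2 * c s"
proof -
  have "(\<Sum>t\<in>F. c t * ipv s t) = c s * ipv s s + (\<Sum>t\<in>F - {s}. c t * ipv s t)"
    using assms(1,2) by (simp add: sum.remove)
  also have "(\<Sum>t\<in>F - {s}. c t * ipv s t) = 0" using assms(2,4) by (intro sum.neutral) auto
  finally show ?thesis using roots_norm[of s] assms(2,3) by auto
qed

lemma bessel:
  assumes "finite F" "F \<subseteq> R" "\<And>a b. a \<in> F \<Longrightarrow> b \<in> F \<Longrightarrow> a \<noteq> b \<Longrightarrow> ipv a b = 0" "supp_ok w"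
  shows "(\<Sum>s\<in>F. ipv w s * ipv w s) \<le> 2 * ipv w w"
proof -
  define v where "v = (\<lambda>k. 2 * w k - (\<Sum>s\<in>F. ipv w s * s k))"
  have sv: "supp_ok v" unfolding v_def using assms(2,4) roots_supp
    by (intro supp_diff supp_smult supp_sum) auto
  have e: "ipv v v = 4 * ipv w w - 2 * (\<Sum>s\<in>F. ipv w s * ipv w s) -
     (2 * (\<Sum>s\<in>F. ipv w s * ipv s w) - (\<Sum>s\<in>F. ipv w s * (\<Sum>t\<in>F. ipv w t * ipv s t)))"
    unfolding v_def by (simp add: ip_lin ip_sum1 ip_sum2)
  have e2: "(\<Sum>s\<in>F. ipv w s * ipv s w) = (\<Sum>s\<in>F. ipv w s * ipv w s)"
    by (intro sum.cong refl) (simp add: ip_sym[of _ w])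
  have e3: "(\<Sum>s\<in>F. ipv w s * (\<Sum>t\<in>F. ipv w t * ipv s t)) = (\<Sum>s\<in>F. 2 * (ipv w s * ipv w s))"
    using orth_sum_collapse[OF assms(1) _ assms(2,3)] by (intro sum.cong) auto
  have "ipv v v = 4 * ipv w w - 2 * (\<Sum>s\<in>F. ipv w s * ipv w s)"
    unfolding e e2 e3 by (simp add: sum_distrib_left[symmetric])
  with ip_nonneg[OF sv] show ?thesis by linarith
qed

lemma root_some_alpha: assumes "s \<in> R" shows "\<exists>k\<in>N. ipv (alpha k) s \<noteq> 0"
proof (rule ccontr)
  assume "\<not> ?thesis"
  then have z: "\<forall>k\<in>N. ipv s (alpha k) = 0" using ip_sym by metis
  have "(\<Sum>j\<in>N. s j * ipv s (alpha j)) = (\<Sum>j\<in>N. s j * (\<Sum>i\<in>N. of_int (cartan adj i j) * s i))"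
    by (intro sum.cong refl) (simp add: ip_alpha2)
  also have "\<dots> = (\<Sum>j\<in>N. \<Sum>i\<in>N. of_int (cartan adj i j) * s i * s j)"
    by (simp add: sum_distrib_left algebra_simps)
  also have "\<dots> = ipv s s" unfolding ip_def by (rule sum.swap)
  finally have "ipv s s = (\<Sum>j\<in>N. s j * ipv s (alpha j))" by simp
  also have "\<dots> = 0" using z by simp
  finally show False using roots_norm[OF assms] by simp
qed

lemma orth_card_bound:
  assumes "finite F" "F \<subseteq> R" "\<And>a b. a \<in> F \<Longrightarrow> b \<in> F \<Longrightarrow> a \<noteq> b \<Longrightarrow> ipv a b = 0"
  shows "card F \<le> 4 * card N"
proof -
  have one: "1 \<le> (\<Sum>k\<in>N. ipv (alpha k) s * ipv (alpha k) s)" if "s \<in> F" for s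
  proof -
    have "s \<in> R" using that assms(2) by blast
    then obtain k where k: "k \<in> N" "ipv (alpha k) s \<noteq> 0" using root_some_alpha by blast
    have "1 \<le> ipv (alpha k) s * ipv (alpha k) s" using k(2)
      by (metis linorder_not_le mult_le_0_iff zero_le_square zero_less_one_class.zero_le_one zmult_zless_mono2 int_one_le_iff_zero_less not_square_less_zero  less_le)
    also have "\<dots> \<le> (\<Sum>k\<in>N. ipv (alpha k) s * ipv (alpha k) s)"
      using k(1) by (intro member_le_sum) auto
    finally show ?thesis .
  qed
  have "int (card F) = (\<Sum>s\<in>F. 1)" by simp
  also have "\<dots> \<le> (\<Sum>s\<in>F. \<Sum>k\<in>N. ipv (alpha k) s * ipv (alpha k) s)" using one by (intro sum_mono) auto
  also have "\<dots> = (\<Sum>k\<in>N. \<Sum>s\<in>F. ipv (alpha k) s * ipv (alpha k) s)" by (rule sum.swap)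
  also have "\<dots> \<le> (\<Sum>k\<in>N. 4)"
  proof (intro sum_mono)
    fix k assume k: "k \<in> N"
    show "(\<Sum>s\<in>F. ipv (alpha k) s * ipv (alpha k) s) \<le> 4"
      using bessel[OF assms supp_alpha[OF k]] ip_alpha_self[OF k] by simp
  qed
  also have "\<dots> = 4 * int (card N)" by simp
  finally show ?thesis by linarith
qed

lemma orth_finite:
  assumes "S \<subseteq> R" "\<And>a b. a \<in> S \<Longrightarrow> b \<in> S \<Longrightarrow> a \<noteq> b \<Longrightarrow> ipv a b = 0"
  shows "finite S"
proof (rule ccontr)
  assume "infinite S"
  then obtain F where F: "finite F" "F \<subseteq> S" "card F = 4 * card N + 1"
    using infinite_arbitrarily_large by blast
  have "card F \<le> 4 * card N"
  proof (rule orth_card_bound)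
    show "finite F" by (rule F(1))
    show "F \<subseteq> R" using F(2) assms(1) by (rule subset_trans)
    show "ipv a b = 0" if "a \<in> F" "b \<in> F" "a \<noteq> b" for a b
      using assms(2) F(2) that by blast
  qed
  with F(3) show False by simp
qed

lemma orth_set_iff: "orth_set n adj X \<longleftrightarrow> X \<subseteq> P \<and> (\<forall>a\<in>X. \<forall>b\<in>X. a \<noteq> b \<longrightarrow> ipv a b = 0)"
  by (simp add: orth_set_def)

lemma PR: "P \<subseteq> R" using pos_root by blast

lemma orth_finite': assumes "orth_set n adj X" shows "finite X"
proof (rule orth_finite)
  show "X \<subseteq> R" using assms PR unfolding orth_set_iff by blast
  show "\<And>a b. a \<in> X \<Longrightarrow> b \<in> X \<Longrightarrow> a \<noteq> b \<Longrightarrow> ipv a b = 0" using assms unfolding orth_set_iff by blast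
qed

lemma setact_eq': assumes "X \<subseteq> P" "k \<in> N" shows "setact n adj k X = fi k ` X"
proof -
  have "X \<subseteq> R" using assms(1) PR by (rule subset_trans)
  then show ?thesis using setact_eq assms(2) by blast
qed

lemma orth_setact: assumes "orth_set n adj X" "k \<in> N" shows "orth_set n adj (setact n adj k X)"
proof -
  have XP: "X \<subseteq> P" using assms(1) by (simp add: orth_set_iff)
  have "fi k ` X \<subseteq> P" using XP fi_pos[OF _ assms(2)] pos_root by blast
  moreover have "\<forall>a\<in>fi k ` X. \<forall>b\<in>fi k ` X. a \<noteq> b \<longrightarrow> ipv a b = 0"
  proof (intro ballI impI)
    fix a b assume "a \<in> fi k ` X" "b \<in> fi k ` X" "a \<noteq> b"
    then obtain x y where xy: "x \<in> X" "y \<in> X" "a = fi k x" "b = fi k y" "x \<noteq> y" by blast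
    then have "ipv x y = 0" using assms(1) by (simp add: orth_set_iff)
    then show "ipv a b = 0" using fi_orth[of x y k] xy XP pos_root assms(2) by blast
  qed
  ultimately show ?thesis using setact_eq'[OF XP assms(2)] by (simp add: orth_set_iff)
qed

lemma card_setact: assumes "X \<subseteq> P" "k \<in> N" shows "card (setact n adj k X) = card X"
  using setact_eq'[OF assms] card_image inj_on_subset[OF fi_inj[OF assms(2)] assms(1)] by metis

lemma wact_props: assumes "orth_set n adj B0" "set ws \<subseteq> N"
  shows "orth_set n adj (wact n adj ws B0) \<and> card (wact n adj ws B0) = card B0"
  using assms(2)
proof (induction ws)
  case Nil then show ?case using assms(1) by (simp add: wact_def)
next
  case (Cons k ws)
  then have IH: "orth_set n adj (wact n adj ws B0)" "card (wact n adj ws B0) = card B0" "k \<in> N" by auto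
  have e: "wact n adj (k # ws) B0 = setact n adj k (wact n adj ws B0)" by (simp add: wact_def)
  show ?case unfolding e using orth_setact[OF IH(1) IH(3)] card_setact[of _ k] IH
    by (simp add: orth_set_iff)
qed

end

locale orbit = ssl +
  fixes BB :: "(nat \<Rightarrow> int) set set"
  assumes orb: "is_orbit n adj BB"
begin

definition "K0 = (SOME K. \<forall>X\<in>BB. card X = K)"

lemma orbit_ex: "\<exists>B0. orth_set n adj B0 \<and> BB = W_orbit n adj B0"
  using orb by (simp add: is_orbit_def)

lemma in_orbit: assumes "X \<in> BB" shows "orth_set n adj X" "finite X" "card X = K0"
proof -
  obtain B0 where B0: "orth_set n adj B0" "BB = W_orbit n adj B0" using orbit_ex by blast
  have all: "\<forall>Y\<in>BB. orth_set n adj Y \<and> card Y = card B0"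
    using wact_props[OF B0(1)] B0(2) by (auto simp: W_orbit_def)
  then show "orth_set n adj X" using assms by blast
  then show "finite X" by (rule orth_finite')
  have "\<exists>K. \<forall>Y\<in>BB. card Y = K" using all by blast
  then have "\<forall>Y\<in>BB. card Y = K0" unfolding K0_def by (rule someI_ex)
  then show "card X = K0" using assms by blast
qed

lemma orbit_setact: assumes "X \<in> BB" "k \<in> N" shows "setact n adj k X \<in> BB"
proof -
  obtain B0 where B0: "orth_set n adj B0" "BB = W_orbit n adj B0" using orbit_ex by blast
  obtain ws where ws: "X = wact n adj ws B0" "set ws \<subseteq> N" using assms(1) B0(2) by (auto simp: W_orbit_def)
  have "setact n adj k X = wact n adj (k # ws) B0" using ws by (simp add: wact_def)
  moreover have "set (k # ws) \<subseteq> N" using ws assms(2) by simp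
  ultimately show ?thesis unfolding B0(2) W_orbit_def by blast
qed

lemma orbit_P: "X \<in> BB \<Longrightarrow> X \<subseteq> P" using in_orbit(1) by (simp add: orth_set_iff)
lemma orbit_orth: "X \<in> BB \<Longrightarrow> a \<in> X \<Longrightarrow> b \<in> X \<Longrightarrow> a \<noteq> b \<Longrightarrow> ipv a b = 0"
  using in_orbit(1) by (simp add: orth_set_iff)

end


context orbit begin

abbreviation "r \<equiv> setact n adj"
abbreviation "lt \<equiv> mless n adj BB"

definition UP :: "nat \<Rightarrow> (nat \<Rightarrow> int) set \<Rightarrow> bool" where
  "UP k X \<longleftrightarrow> (\<exists>b\<in>X. ipv b (alpha k) = -1 \<and> (\<forall>g\<in>X. ipv g (alpha k) = 1 \<longrightarrow> ht n b < ht n g))"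

lemma r_img: "X \<in> BB \<Longrightarrow> k \<in> N \<Longrightarrow> r k X = fi k ` X"
  using setact_eq' orbit_P by blast

lemma fiP: "b \<in> P \<Longrightarrow> k \<in> N \<Longrightarrow> fi k b \<in> P" using fi_pos pos_root by blast

lemma img_P: "X \<subseteq> P \<Longrightarrow> k \<in> N \<Longrightarrow> fi k ` X \<subseteq> P" using fiP by blast

lemma rr: assumes "X \<in> BB" "k \<in> N" shows "r k (r k X) = X"
proof -
  have "r k X \<in> BB" using orbit_setact assms .
  then have "r k (r k X) = fi k ` fi k ` X" using r_img assms by simp
  also have "\<dots> = X" using fi_fi[OF _ assms(2)] orbit_P[OF assms(1)] by (force simp: image_image)
  finally show ?thesis .
qed

lemma rcomm: assumes "X \<in> BB" "i \<in> N" "j \<in> N" "\<not> adj i j" "i \<noteq> j"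
  shows "r i (r j X) = r j (r i X)"
proof -
  have "r i (r j X) = fi i ` fi j ` X" using r_img orbit_setact assms by simp
  also have "\<dots> = fi j ` fi i ` X" unfolding image_image
    using fi_comm[OF _ assms(2-5)] orbit_P[OF assms(1)] PR by (intro image_cong) auto
  also have "\<dots> = r j (r i X)" using r_img orbit_setact assms by simp
  finally show ?thesis .
qed

lemma rbraid: assumes "X \<in> BB" "i \<in> N" "j \<in> N" "adj i j"
  shows "r i (r j (r i X)) = r j (r i (r j X))"
proof -
  have "r i (r j (r i X)) = fi i ` fi j ` fi i ` X" using r_img orbit_setact assms by simp
  also have "\<dots> = fi j ` fi i ` fi j ` X" unfolding image_image
    using fi_braid[OF _ assms(2-4)] orbit_P[OF assms(1)] PR by (intro image_cong) auto
  also have "\<dots> = r j (r i (r j X))" using r_img orbit_setact assms by simp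
  finally show ?thesis .
qed

lemma ht_pos_P: assumes "b \<in> P" shows "ht n b \<ge> 1"
proof -
  have "ht n b > 0" using ht_pos[OF roots_supp[OF pos_root[OF assms]]] root_nz[OF pos_root[OF assms]] assms
    by (simp add: pos_roots_iff)
  then show ?thesis by simp
qed

definition "q = 1 / (real K0 + 1)"
definition Phi :: "(nat \<Rightarrow> int) set \<Rightarrow> real" where "Phi X = (\<Sum>b\<in>X. q ^ nat (ht n b))"

lemma q_pos: "0 < q" and q_le1: "q \<le> 1" and Kq: "real K0 * q < 1"
  unfolding q_def by (auto simp: field_simps)

lemma prec_Phi: assumes "X \<in> BB" "Y \<in> BB" "prec n X Y" shows "Phi Y < Phi X"
proof -
  have ne: "X \<noteq> Y" and mm: "Min (ht n ` (X - Y)) < Min (ht n ` (Y - X))"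
    using assms(3) unfolding prec_def by auto
  have fX: "finite X" and fY: "finite Y" using in_orbit assms by auto
  have cXY: "card X = card Y" using in_orbit(3) assms by simp
  have XY: "X - Y \<noteq> {}"
  proof
    assume "X - Y = {}"
    then have "X \<subseteq> Y" by blast
    then have "X = Y" using card_subset_eq[OF fY _ cXY] by blast
    with ne show False by simp
  qed
  have YX: "Y - X \<noteq> {}"
  proof
    assume "Y - X = {}"
    then have "Y \<subseteq> X" by blast
    then have "Y = X" using card_subset_eq[OF fX _ cXY[symmetric]] by blast
    with ne show False by simp
  qed
  define h where "h = Min (ht n ` (X - Y))"
  have "h \<in> ht n ` (X - Y)" unfolding h_def using fX XY by (intro Min_in) auto
  then obtain x0 where x0: "x0 \<in> X - Y" "ht n x0 = h" by blast
  have hy: "ht n y \<ge> h + 1" if "y \<in> Y - X" for y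
  proof -
    have "Min (ht n ` (Y - X)) \<le> ht n y" using that fY by (intro Min_le) auto
    then show ?thesis using mm unfolding h_def by linarith
  qed
  have h1: "h \<ge> 1" using x0 ht_pos_P orbit_P assms(1) by blast
  have A: "(\<Sum>b\<in>X - Y. q ^ nat (ht n b)) \<ge> q ^ nat h"
  proof -
    have "q ^ nat (ht n x0) \<le> (\<Sum>b\<in>X - Y. q ^ nat (ht n b))"
      using x0(1) fX q_pos by (intro member_le_sum) auto
    then show ?thesis using x0(2) by simp
  qed
  have B: "(\<Sum>b\<in>Y - X. q ^ nat (ht n b)) \<le> real (card (Y - X)) * q ^ (nat h + 1)"
  proof -
    have "(\<Sum>b\<in>Y - X. q ^ nat (ht n b)) \<le> (\<Sum>b\<in>Y - X. q ^ (nat h + 1))"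
    proof (intro sum_mono)
      fix b assume "b \<in> Y - X"
      then have "nat h + 1 \<le> nat (ht n b)" using hy h1 by fastforce
      then show "q ^ nat (ht n b) \<le> q ^ (nat h + 1)" using q_pos q_le1 by (intro power_decreasing) auto
    qed
    then show ?thesis by simp
  qed
  have cYX: "card (Y - X) \<le> K0" using in_orbit(3)[OF assms(2)] fY by (metis card_Diff_subset Diff_subset card_mono)
  have "real (card (Y - X)) * q ^ (nat h + 1) \<le> real K0 * q ^ (nat h + 1)"
    using cYX q_pos by (intro mult_right_mono) auto
  also have "\<dots> = (real K0 * q) * q ^ nat h" by simp
  also have "\<dots> < q ^ nat h" using Kq q_pos by simp
  finally have C: "(\<Sum>b\<in>Y - X. q ^ nat (ht n b)) < (\<Sum>b\<in>X - Y. q ^ nat (ht n b))" using A B by linarith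
  have "Phi X = (\<Sum>b\<in>X \<inter> Y. q ^ nat (ht n b)) + (\<Sum>b\<in>X - Y. q ^ nat (ht n b))"
    unfolding Phi_def using sum.Int_Diff[OF fX] by blast
  moreover have "Phi Y = (\<Sum>b\<in>Y \<inter> X. q ^ nat (ht n b)) + (\<Sum>b\<in>Y - X. q ^ nat (ht n b))"
    unfolding Phi_def using sum.Int_Diff[OF fY] by blast
  moreover have "Y \<inter> X = X \<inter> Y" by blast
  ultimately show ?thesis using C by simp
qed

definition "E = {(B', setact n adj j B') | B' j. B' \<in> BB \<and> j \<in> N \<and> prec n B' (setact n adj j B')}"

lemma lt_def': "lt X Y \<longleftrightarrow> (X, Y) \<in> E\<^sup>+" unfolding mless_def E_def by simp

lemma lt_Phi: assumes "lt X Y" shows "X \<in> BB \<and> Y \<in> BB \<and> Phi Y < Phi X"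
  using assms unfolding lt_def'
proof (induction rule: trancl_induct)
  case (base y)
  then obtain j where "X \<in> BB" "j \<in> N" "y = r j X" "prec n X (r j X)" unfolding E_def by blast
  then show ?case using prec_Phi orbit_setact by blast
next
  case (step y z)
  then obtain j where "y \<in> BB" "j \<in> N" "z = r j y" "prec n y (r j y)" unfolding E_def by blast
  then show ?case using prec_Phi orbit_setact step.IH by force
qed

lemma lt_irrefl: "\<not> lt X X" using lt_Phi by blast

lemma lt_trans: "lt X Y \<Longrightarrow> lt Y Z \<Longrightarrow> lt X Z" unfolding lt_def' by (rule trancl_trans)

lemma edge: assumes "X \<in> BB" "k \<in> N" "prec n X (r k X)" shows "lt X (r k X)"
  unfolding lt_def' E_def using assms by blast

end


context orbit begin

lemma pair_vec_norm: assumes "X \<in> BB" "b \<in> X" "g \<in> X" "b \<noteq> g" "i \<in> N" "j \<in> N"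
  shows "ipv (\<lambda>k. g k - b k + x * alpha i k + y * alpha j k) (\<lambda>k. g k - b k + x * alpha i k + y * alpha j k)
     = 4 + 2*x*x + 2*y*y + 2*x*y*cartan adj i j + 2*x*(ipv g (alpha i) - ipv b (alpha i))
       + 2*y*(ipv g (alpha j) - ipv b (alpha j))"
proof -
  have bR: "b \<in> R" and gR: "g \<in> R" using assms orbit_P PR by blast+
  have o: "ipv b g = 0" "ipv g b = 0" using orbit_orth[OF assms(1,2,3,4)] orbit_orth[OF assms(1,3,2)] assms(4) by auto
  have s: "ipv (alpha i) g = ipv g (alpha i)" "ipv (alpha i) b = ipv b (alpha i)"
    "ipv (alpha j) g = ipv g (alpha j)" "ipv (alpha j) b = ipv b (alpha j)" by (rule ip_sym)+
  have a: "ipv (alpha i) (alpha j) = cartan adj i j" "ipv (alpha j) (alpha i) = cartan adj i j"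
    "ipv (alpha i) (alpha i) = 2" "ipv (alpha j) (alpha j) = 2"
    using ip_alpha_alpha assms(5,6) cartan_sym ip_alpha_self by auto
  show ?thesis
    using roots_norm[OF bR] roots_norm[OF gR]
    by (simp add: ip_lin o s a) (simp add: algebra_simps)
qed

lemma pair_vec_supp: assumes "X \<in> BB" "b \<in> X" "g \<in> X" "i \<in> N" "j \<in> N"
  shows "supp_ok (\<lambda>k. g k - b k + x * alpha i k + y * alpha j k)"
  using assms orbit_P PR roots_supp supp_alpha
  by (intro supp_add supp_diff supp_smult) blast+

lemma pair_vec_ht: assumes "i \<in> N" "j \<in> N"
  shows "ht n (\<lambda>k. g k - b k + x * alpha i k + y * alpha j k) = ht n g - ht n b + x + y"
proof -
  have "ht n (\<lambda>k. g k - b k + x * alpha i k + y * alpha j k) = ht n g - ht n b + x * ht n (alpha i) + y * ht n (alpha j)"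
    by (simp add: ht_lin)
  then show ?thesis using ht_alpha assms by simp
qed

lemma pair_norm: assumes "X \<in> BB" "b \<in> X" "g \<in> X" "b \<noteq> g" "i \<in> N" "j \<in> N"
  and "4 + 2*x*x + 2*y*y + 2*x*y*cartan adj i j + 2*x*(ipv g (alpha i) - ipv b (alpha i))
       + 2*y*(ipv g (alpha j) - ipv b (alpha j)) = 2"
  shows "ht n g - ht n b + x + y \<noteq> 0"
  using norm2_ht[OF pair_vec_supp[OF assms(1,2,3,5,6)]] pair_vec_norm[OF assms(1-6)] assms(7) pair_vec_ht[OF assms(5,6)]
  by simp

lemma pair_zero: assumes "X \<in> BB" "b \<in> X" "g \<in> X" "b \<noteq> g" "i \<in> N" "j \<in> N"
  and "4 + 2*x*x + 2*y*y + 2*x*y*cartan adj i j + 2*x*(ipv g (alpha i) - ipv b (alpha i))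
       + 2*y*(ipv g (alpha j) - ipv b (alpha j)) = 0"
  shows "g = (\<lambda>k. b k - x * alpha i k - y * alpha j k)"
proof -
  have "(\<lambda>k. g k - b k + x * alpha i k + y * alpha j k) = (\<lambda>k. 0)"
    using ip_zero_imp[OF pair_vec_supp[OF assms(1,2,3,5,6)]] pair_vec_norm[OF assms(1-6)] assms(7) by simp
  then have "\<forall>k. g k - b k + x * alpha i k + y * alpha j k = 0" by (simp add: fun_eq_iff)
  then show ?thesis by (auto simp: fun_eq_iff algebra_simps)
qed

lemma key: assumes "X \<in> BB" "b \<in> X" "g \<in> X" "k \<in> N" "ipv b (alpha k) = -1" "ipv g (alpha k) = 1"
  shows "ht n g \<noteq> ht n b + 1"
proof -
  have "b \<noteq> g" using assms(5,6) by auto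
  from pair_norm[OF assms(1-3) this assms(4) assms(4), of "-1" 0] assms(5,6) show ?thesis by simp
qed

end


context orbit begin

lemma img_min: assumes "finite A" "A \<noteq> {}" obtains a where "a \<in> A" "f a = Min (f ` A)"
proof -
  have m: "Min (f ` A) \<in> f ` A" using assms by (intro Min_in) auto
  from m show ?thesis
  proof (rule imageE)
    fix a assume "Min (f ` A) = f a" "a \<in> A"
    then show ?thesis using that by simp
  qed
qed

lemma c_range: assumes "X \<in> BB" "b \<in> X" "k \<in> N"
  shows "ipv b (alpha k) \<in> {-1,0,1,2}" "ipv b (alpha k) = 2 \<longleftrightarrow> b = alpha k"
  using ip_alpha_range[of b k] assms orbit_P by blast+

lemma fi_fixed: assumes "X \<in> BB" "b \<in> X" "k \<in> N" "ipv b (alpha k) \<notin> {-1,1}" shows "fi k b = b"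
proof -
  have bP: "b \<in> P" using assms orbit_P by blast
  have "ipv b (alpha k) = 0 \<or> b = alpha k" using c_range[OF assms(1-3)] assms(4) by auto
  then show ?thesis
  proof
    assume "ipv b (alpha k) = 0"
    moreover then have "b \<noteq> alpha k" using ip_alpha_self[OF assms(3)] by auto
    ultimately show ?thesis using fi_eq[OF bP assms(3)] by (simp add: rf_def')
  next
    assume "b = alpha k" then show ?thesis using fi_eq[OF bP assms(3)] by simp
  qed
qed

lemma fi_moved_ht: assumes "X \<in> BB" "b \<in> X" "k \<in> N" "ipv b (alpha k) \<in> {-1,1}"
  shows "ht n (fi k b) = ht n b - ipv b (alpha k)" "fi k b = rf k b"
proof -
  have bP: "b \<in> P" using assms orbit_P by blast
  have "b \<noteq> alpha k" using assms(4) ip_alpha_self[OF assms(3)] by auto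
  then show "fi k b = rf k b" using fi_eq[OF bP assms(3)] by simp
  then show "ht n (fi k b) = ht n b - ipv b (alpha k)" using ht_rfl[OF assms(3)] by simp
qed

lemma fi_moved: assumes "X \<in> BB" "b \<in> X" "k \<in> N" "ipv b (alpha k) \<in> {-1,1}"
  shows "b \<notin> fi k ` X" "fi k b \<notin> X"
proof -
  have bP: "b \<in> P" using assms orbit_P by blast
  have nb: "b \<notin> fi k ` X"
  proof
    assume "b \<in> fi k ` X"
    then obtain g where g: "g \<in> X" "b = fi k g" by blast
    have gP: "g \<in> P" using g assms orbit_P by blast
    have "fi k b = g" using g fi_fi[OF gP assms(3)] by simp
    then have e: "g = rf k b" using fi_moved_ht(2)[OF assms] by simp
    have "ipv b g = ipv b b - ipv b (alpha k) * ipv b (alpha k)"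
      unfolding e rf_def' by (simp add: ip_lin)
    then have i1: "ipv b g = 1" using roots_norm[OF pos_root[OF bP]] assms(4) by auto
    show False
    proof (cases "g = b")
      case True then show False using i1 roots_norm[OF pos_root[OF bP]] by simp
    next
      case False then show False using orbit_orth[OF assms(1,2) g(1)] i1 by auto
    qed
  qed
  then show "b \<notin> fi k ` X" .
  show "fi k b \<notin> X"
  proof
    assume "fi k b \<in> X"
    then have "fi k (fi k b) \<in> fi k ` X" by blast
    then show False using fi_fi[OF bP assms(3)] nb by simp
  qed
qed

definition Dk :: "nat \<Rightarrow> (nat \<Rightarrow> int) set \<Rightarrow> (nat \<Rightarrow> int) set" where
  "Dk k X = {b\<in>X. ipv b (alpha k) \<in> {-1,1}}"

lemma DX: assumes "X \<in> BB" "k \<in> N" shows "X - r k X = Dk k X"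
proof (intro set_eqI iffI)
  fix b assume b: "b \<in> X - r k X"
  show "b \<in> Dk k X"
  proof (rule ccontr)
    assume "b \<notin> Dk k X"
    then have "fi k b = b" using fi_fixed[OF assms(1) _ assms(2)] b unfolding Dk_def by auto
    then have "b \<in> r k X" using b r_img[OF assms] by (metis DiffD1 image_eqI)
    with b show False by simp
  qed
next
  fix b assume "b \<in> Dk k X"
  then show "b \<in> X - r k X" using fi_moved(1)[OF assms(1) _ assms(2)] r_img[OF assms] unfolding Dk_def by auto
qed

lemma DY: assumes "X \<in> BB" "k \<in> N" shows "r k X - X = fi k ` Dk k X"
proof (intro set_eqI iffI)
  fix g assume g: "g \<in> r k X - X"
  then obtain b where b: "b \<in> X" "g = fi k b" using r_img[OF assms] by auto
  have "b \<in> Dk k X"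
  proof (rule ccontr)
    assume "b \<notin> Dk k X"
    then have "fi k b = b" using fi_fixed[OF assms(1) b(1) assms(2)] b unfolding Dk_def by auto
    then show False using g b by simp
  qed
  then show "g \<in> fi k ` Dk k X" using b by blast
next
  fix g assume "g \<in> fi k ` Dk k X"
  then obtain b where b: "b \<in> X" "ipv b (alpha k) \<in> {-1,1}" "g = fi k b" unfolding Dk_def by blast
  then show "g \<in> r k X - X" using fi_moved(2)[OF assms(1) b(1) assms(2) b(2)] r_img[OF assms] by auto
qed

lemma Dk_fin: "X \<in> BB \<Longrightarrow> finite (Dk k X)" using in_orbit(2) unfolding Dk_def by auto

lemma min_ne: assumes "X \<in> BB" "k \<in> N" "Dk k X \<noteq> {}"
  shows "Min (ht n ` Dk k X) \<noteq> Min (ht n ` fi k ` Dk k X)"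
proof
  let ?D = "Dk k X"
  assume eq: "Min (ht n ` ?D) = Min (ht n ` fi k ` ?D)"
  have fD: "finite ?D" using Dk_fin[OF assms(1)] .
  obtain g where g: "g \<in> fi k ` ?D" "ht n g = Min (ht n ` fi k ` ?D)"
    using img_min[of "fi k ` ?D" "ht n"] fD assms(3) by blast
  then obtain d where d: "d \<in> ?D" "ht n (fi k d) = Min (ht n ` fi k ` ?D)" by blast
  obtain u where u: "u \<in> ?D" "ht n u = Min (ht n ` ?D)" using img_min[of ?D "ht n"] fD assms(3) by blast
  have m1d: "Min (ht n ` ?D) \<le> ht n d" using d(1) fD by (intro Min_le) auto
  have m2u: "Min (ht n ` fi k ` ?D) \<le> ht n (fi k u)" using u(1) fD by (intro Min_le) auto
  have dX: "d \<in> X" "ipv d (alpha k) \<in> {-1,1}" and uX: "u \<in> X" "ipv u (alpha k) \<in> {-1,1}"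
    using d(1) u(1) unfolding Dk_def by auto
  have hd: "ht n (fi k d) = ht n d - ipv d (alpha k)" using fi_moved_ht(1)[OF assms(1) dX(1) assms(2) dX(2)] .
  have hu: "ht n (fi k u) = ht n u - ipv u (alpha k)" using fi_moved_ht(1)[OF assms(1) uX(1) assms(2) uX(2)] .
  have cd: "ipv d (alpha k) = 1" using dX(2) hd d(2) m1d eq by auto
  have cu: "ipv u (alpha k) = -1" using uX(2) hu u(2) m2u eq by auto
  have "ht n d \<noteq> ht n u + 1" using key[OF assms(1) uX(1) dX(1) assms(2) cu cd] .
  then show False using hd d(2) u(2) eq cd by simp
qed

lemma X_ne_rX: assumes "X \<in> BB" "k \<in> N" "Dk k X \<noteq> {}" shows "X \<noteq> r k X"
  using DX[OF assms(1,2)] assms(3) by auto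

lemma prec_iff_UP: assumes "X \<in> BB" "k \<in> N" shows "prec n X (r k X) \<longleftrightarrow> UP k X"
proof
  assume pr: "prec n X (r k X)"
  let ?D = "Dk k X"
  have ne: "X \<noteq> r k X" using pr by (simp add: prec_def)
  have Dne: "?D \<noteq> {}"
  proof
    assume "?D = {}"
    then have "X \<subseteq> r k X" using DX[OF assms] by blast
    moreover have "card X = card (r k X)" using in_orbit(3) assms orbit_setact by simp
    moreover have "finite (r k X)" using in_orbit(2) orbit_setact assms by blast
    ultimately have "X = r k X" using card_subset_eq by blast
    with ne show False by simp
  qed
  have fD: "finite ?D" using Dk_fin[OF assms(1)] .
  have mm: "Min (ht n ` ?D) < Min (ht n ` fi k ` ?D)"
    using pr unfolding prec_def DX[OF assms] DY[OF assms] by simp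
  obtain u where u: "u \<in> ?D" "ht n u = Min (ht n ` ?D)" using img_min[of ?D "ht n"] fD Dne by blast
  have uX: "u \<in> X" "ipv u (alpha k) \<in> {-1,1}" using u(1) unfolding Dk_def by auto
  have m2: "Min (ht n ` fi k ` ?D) \<le> ht n (fi k g)" if "g \<in> ?D" for g using that fD by (intro Min_le) auto
  have hu: "ht n (fi k u) = ht n u - ipv u (alpha k)" using fi_moved_ht(1)[OF assms(1) uX(1) assms(2) uX(2)] .
  have cu: "ipv u (alpha k) = -1" using uX(2) hu m2[OF u(1)] mm u(2) by auto
  show "UP k X" unfolding UP_def
  proof (intro bexI[of _ u] conjI ballI impI)
    show "u \<in> X" "ipv u (alpha k) = -1" by fact+
    fix g assume g: "g \<in> X" "ipv g (alpha k) = 1"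
    then have gD: "g \<in> ?D" unfolding Dk_def by auto
    have "ht n (fi k g) = ht n g - 1" using fi_moved_ht(1)[OF assms(1) g(1) assms(2)] g(2) by simp
    then show "ht n u < ht n g" using m2[OF gD] mm u(2) by linarith
  qed
next
  assume "UP k X"
  then obtain b where b: "b \<in> X" "ipv b (alpha k) = -1" "\<forall>g\<in>X. ipv g (alpha k) = 1 \<longrightarrow> ht n b < ht n g"
    unfolding UP_def by blast
  let ?D = "Dk k X"
  have bD: "b \<in> ?D" using b unfolding Dk_def by auto
  have fD: "finite ?D" using Dk_fin[OF assms(1)] .
  have m1: "Min (ht n ` ?D) \<le> ht n b" using bD fD by (intro Min_le) auto
  obtain g where g: "g \<in> fi k ` ?D" "ht n g = Min (ht n ` fi k ` ?D)"
    using img_min[of "fi k ` ?D" "ht n"] fD bD by blast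
  then obtain d where d: "d \<in> ?D" "ht n (fi k d) = Min (ht n ` fi k ` ?D)" by blast
  have dX: "d \<in> X" "ipv d (alpha k) \<in> {-1,1}" using d(1) unfolding Dk_def by auto
  have hd: "ht n (fi k d) = ht n d - ipv d (alpha k)" using fi_moved_ht(1)[OF assms(1) dX(1) assms(2) dX(2)] .
  have m1d: "Min (ht n ` ?D) \<le> ht n d" using d(1) fD by (intro Min_le) auto
  have "Min (ht n ` ?D) < Min (ht n ` fi k ` ?D)"
  proof (cases "ipv d (alpha k) = 1")
    case True
    have "ht n b < ht n d" using b(3) dX(1) True by blast
    moreover have "ht n d \<noteq> ht n b + 1" using key[OF assms(1) b(1) dX(1) assms(2) b(2) True] .
    ultimately show ?thesis using hd d(2) m1 True by linarith
  next
    case False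
    then have "ipv d (alpha k) = -1" using dX(2) by auto
    then show ?thesis using hd d(2) m1d by linarith
  qed
  moreover have "X \<noteq> r k X" using X_ne_rX[OF assms] bD by blast
  ultimately show "prec n X (r k X)" unfolding prec_def DX[OF assms] DY[OF assms] by simp
qed

lemma lt_iff_UP: assumes "X \<in> BB" "k \<in> N" shows "lt X (r k X) \<longleftrightarrow> UP k X"
proof
  assume "UP k X" then show "lt X (r k X)" using edge[OF assms] prec_iff_UP[OF assms] by simp
next
  assume l: "lt X (r k X)"
  show "UP k X"
  proof (rule ccontr)
    assume nu: "\<not> UP k X"
    have ne: "X \<noteq> r k X" using l lt_irrefl by metis
    have Dne: "Dk k X \<noteq> {}"
    proof
      assume "Dk k X = {}"
      then have "X \<subseteq> r k X" using DX[OF assms] by blast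
      moreover have "card X = card (r k X)" using in_orbit(3) assms orbit_setact by simp
      moreover have "finite (r k X)" using in_orbit(2) orbit_setact assms by blast
      ultimately have "X = r k X" using card_subset_eq by blast
      with ne show False by simp
    qed
    have rX: "r k X \<in> BB" using orbit_setact[OF assms] .
    have "\<not> prec n X (r k X)" using nu prec_iff_UP[OF assms] by simp
    then have "\<not> Min (ht n ` Dk k X) < Min (ht n ` fi k ` Dk k X)"
      using ne unfolding prec_def DX[OF assms] DY[OF assms] by simp
    then have "Min (ht n ` fi k ` Dk k X) < Min (ht n ` Dk k X)" using min_ne[OF assms Dne] by linarith
    then have "prec n (r k X) X" using ne unfolding prec_def DX[OF assms] DY[OF assms] by simp
    then have "prec n (r k X) (r k (r k X))" using rr[OF assms] by simp
    then have "lt (r k X) (r k (r k X))" using edge[OF rX assms(2)] by simp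
    then have "lt (r k X) X" using rr[OF assms] by simp
    then show False using l lt_trans lt_irrefl by metis
  qed
qed

lemma trich: assumes "X \<in> BB" "k \<in> N" "Dk k X \<noteq> {}" shows "lt X (r k X) \<or> lt (r k X) X"
proof -
  have rX: "r k X \<in> BB" using orbit_setact[OF assms(1,2)] .
  have ne: "X \<noteq> r k X" using X_ne_rX[OF assms] .
  have "Min (ht n ` Dk k X) < Min (ht n ` fi k ` Dk k X) \<or> Min (ht n ` fi k ` Dk k X) < Min (ht n ` Dk k X)"
    using min_ne[OF assms] by linarith
  then show ?thesis
  proof
    assume "Min (ht n ` Dk k X) < Min (ht n ` fi k ` Dk k X)"
    then have "prec n X (r k X)" using ne unfolding prec_def DX[OF assms(1,2)] DY[OF assms(1,2)] by simp
    then show ?thesis using edge[OF assms(1,2)] by simp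
  next
    assume "Min (ht n ` fi k ` Dk k X) < Min (ht n ` Dk k X)"
    then have "prec n (r k X) X" using ne unfolding prec_def DX[OF assms(1,2)] DY[OF assms(1,2)] by simp
    then have "prec n (r k X) (r k (r k X))" using rr[OF assms(1,2)] by simp
    then have "lt (r k X) (r k (r k X))" using edge[OF rX assms(2)] by simp
    then show ?thesis using rr[OF assms(1,2)] by simp
  qed
qed

end


definition ca :: "int \<times> int \<times> int \<Rightarrow> int" where "ca t = fst t"
definition cb :: "int \<times> int \<times> int \<Rightarrow> int" where "cb t = fst (snd t)"
definition ch :: "int \<times> int \<times> int \<Rightarrow> int" where "ch t = snd (snd t)"

lemma c_simps[simp]: "ca (a,b,h) = a" "cb (a,b,h) = b" "ch (a,b,h) = h"
  by (simp_all add: ca_def cb_def ch_def)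

definition PCf :: "int \<Rightarrow> int \<Rightarrow> int \<Rightarrow> int \<Rightarrow> int \<Rightarrow> int \<Rightarrow> int \<Rightarrow> bool" where
  "PCf c a1 b1 h1 a2 b2 h2 \<longleftrightarrow> (\<forall>x y. 4 + 2*x*x + 2*y*y + 2*x*y*c + 2*x*(a2-a1) + 2*y*(b2-b1) \<ge> 0 \<and>
     (4 + 2*x*x + 2*y*y + 2*x*y*c + 2*x*(a2-a1) + 2*y*(b2-b1) = 0 \<longrightarrow>
        a2 = a1 - 2*x - y*c \<and> b2 = b1 - x*c - 2*y \<and> h2 = h1 - (x+y) \<and> x*a1 + y*b1 = 2) \<and>
     (4 + 2*x*x + 2*y*y + 2*x*y*c + 2*x*(a2-a1) + 2*y*(b2-b1) = 2 \<longrightarrow> h2 - h1 + x + y \<noteq> 0))"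

definition PC :: "int \<Rightarrow> int \<times> int \<times> int \<Rightarrow> int \<times> int \<times> int \<Rightarrow> bool" where
  "PC c t s \<longleftrightarrow> PCf c (ca t) (cb t) (ch t) (ca s) (cb s) (ch s)"

definition ZCf :: "int \<Rightarrow> int \<Rightarrow> int \<Rightarrow> int \<Rightarrow> int \<Rightarrow> int \<Rightarrow> int \<Rightarrow> bool" where
  "ZCf c a1 b1 a2 b2 a3 b3 \<longleftrightarrow> (\<forall>x y. 4 + 2*x*x + 2*y*y + 2*x*y*c + 2*x*(a2-a1) + 2*y*(b2-b1) = 0 \<longrightarrow> x*a3 + y*b3 = 0)"

definition ZC :: "int \<Rightarrow> int \<times> int \<times> int \<Rightarrow> int \<times> int \<times> int \<Rightarrow> int \<times> int \<times> int \<Rightarrow> bool" where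
  "ZC c t s u \<longleftrightarrow> ZCf c (ca t) (cb t) (ca s) (cb s) (ca u) (cb u)"

definition OK :: "int \<Rightarrow> int \<times> int \<times> int \<Rightarrow> bool" where
  "OK c t \<longleftrightarrow> (ca t = -1 \<or> ca t = 0 \<or> ca t = 1 \<or> ca t = 2) \<and> (cb t = -1 \<or> cb t = 0 \<or> cb t = 1 \<or> cb t = 2) \<and> ch t \<ge> 1 \<and>
     (ca t = 2 \<longrightarrow> cb t = c \<and> ch t = 1) \<and> (cb t = 2 \<longrightarrow> ca t = c \<and> ch t = 1) \<and>
     (c = -1 \<longrightarrow> \<not> (ca t = -1 \<and> cb t = -1) \<and> (ca t = 1 \<and> cb t = 1 \<longrightarrow> ch t = 2))"

definition SP :: "int \<Rightarrow> int \<times> int \<times> int \<Rightarrow> int \<times> int \<times> int \<Rightarrow> bool" where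
  "SP c t s \<longleftrightarrow> (ca t = 2 \<longrightarrow> ca s = 0) \<and> (cb t = 2 \<longrightarrow> cb s = 0) \<and>
     (c = -1 \<and> ca t = 1 \<and> cb t = 1 \<longrightarrow> ca s + cb s = 0)"

definition GOOD :: "int \<Rightarrow> (int \<times> int \<times> int) set \<Rightarrow> bool" where
  "GOOD c T \<longleftrightarrow> finite T \<and> (\<forall>t\<in>T. OK c t) \<and> (\<forall>t\<in>T. \<forall>s\<in>T. t \<noteq> s \<longrightarrow> PC c t s \<and> SP c t s) \<and>
     (\<forall>t\<in>T. \<forall>s\<in>T. \<forall>u\<in>T. t \<noteq> s \<and> t \<noteq> u \<and> s \<noteq> u \<longrightarrow> ZC c t s u)"

definition ta :: "int \<Rightarrow> int \<times> int \<times> int \<Rightarrow> int \<times> int \<times> int" where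
  "ta c t = (if ca t = 2 then t else (- ca t, cb t - ca t * c, ch t - ca t))"
definition tb :: "int \<Rightarrow> int \<times> int \<times> int \<Rightarrow> int \<times> int \<times> int" where
  "tb c t = (if cb t = 2 then t else (ca t - cb t * c, - cb t, ch t - cb t))"

definition UPa :: "(int \<times> int \<times> int) set \<Rightarrow> bool" where
  "UPa T \<longleftrightarrow> (\<exists>t\<in>T. ca t = -1 \<and> (\<forall>s\<in>T. ca s = 1 \<longrightarrow> ch t < ch s))"
definition UPb :: "(int \<times> int \<times> int) set \<Rightarrow> bool" where
  "UPb T \<longleftrightarrow> (\<exists>t\<in>T. cb t = -1 \<and> (\<forall>s\<in>T. cb s = 1 \<longrightarrow> ch t < ch s))"

lemma UPa_img: "UPa (f ` T) \<longleftrightarrow> (\<exists>t\<in>T. ca (f t) = -1 \<and> (\<forall>s\<in>T. ca (f s) = 1 \<longrightarrow> ch (f t) < ch (f s)))"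
  by (simp add: UPa_def)
lemma UPb_img: "UPb (f ` T) \<longleftrightarrow> (\<exists>t\<in>T. cb (f t) = -1 \<and> (\<forall>s\<in>T. cb (f s) = 1 \<longrightarrow> ch (f t) < ch (f s)))"
  by (simp add: UPb_def)

lemma negUPb: assumes "finite T" "\<not> UPb (f ` T)"
  shows "(\<forall>t\<in>T. cb (f t) \<noteq> -1) \<or> (\<exists>d\<in>T. cb (f d) = 1 \<and> (\<forall>t\<in>T. cb (f t) = -1 \<longrightarrow> ch (f d) \<le> ch (f t)))"
proof (cases "\<exists>t\<in>T. cb (f t) = -1")
  case True
  let ?S = "{t\<in>T. cb (f t) = -1}"
  have fS: "finite ?S" "?S \<noteq> {}" using assms(1) True by auto
  obtain t0 where t0: "t0 \<in> ?S" "\<forall>t\<in>?S. ch (f t0) \<le> ch (f t)"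
    using ex_min_if_finite[of "(\<lambda>t. ch (f t)) ` ?S"] fS
    by (metis (mono_tags, lifting) arg_min_if_finite(1) arg_min_if_finite(2) not_le)
  then obtain d where "d \<in> T" "cb (f d) = 1" "\<not> ch (f t0) < ch (f d)" using assms(2) unfolding UPb_img by auto
  then show ?thesis using t0 by (intro disjI2 bexI[of _ d]) force+
qed auto

lemma negUPa: assumes "finite T" "\<not> UPa (f ` T)"
  shows "(\<forall>t\<in>T. ca (f t) \<noteq> -1) \<or> (\<exists>d\<in>T. ca (f d) = 1 \<and> (\<forall>t\<in>T. ca (f t) = -1 \<longrightarrow> ch (f d) \<le> ch (f t)))"
proof (cases "\<exists>t\<in>T. ca (f t) = -1")
  case True
  let ?S = "{t\<in>T. ca (f t) = -1}"
  have fS: "finite ?S" "?S \<noteq> {}" using assms(1) True by auto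
  obtain t0 where t0: "t0 \<in> ?S" "\<forall>t\<in>?S. ch (f t0) \<le> ch (f t)"
    using ex_min_if_finite[of "(\<lambda>t. ch (f t)) ` ?S"] fS
    by (metis (mono_tags, lifting) arg_min_if_finite(1) arg_min_if_finite(2) not_le)
  then obtain d where "d \<in> T" "ca (f d) = 1" "\<not> ch (f t0) < ch (f d)" using assms(2) unfolding UPa_img by auto
  then show ?thesis using t0 by (intro disjI2 bexI[of _ d]) force+
qed auto

lemma GOOD2: assumes "GOOD c T" "t \<in> T" "s \<in> T"
  shows "OK c t \<and> OK c s \<and> (t \<noteq> s \<longrightarrow> PC c t s \<and> SP c t s \<and> PC c s t \<and> SP c s t)"
  using assms unfolding GOOD_def by metis

lemma GOOD3: assumes "GOOD c T" "t \<in> T" "s \<in> T" "u \<in> T"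
  shows "t \<noteq> s \<and> t \<noteq> u \<and> s \<noteq> u \<longrightarrow> ZC c t s u \<and> ZC c s t u \<and> ZC c t u s \<and> ZC c u t s \<and> ZC c s u t \<and> ZC c u s t"
  using assms unfolding GOOD_def by metis

lemma GOOD_fin: "GOOD c T \<Longrightarrow> finite T" by (simp add: GOOD_def)


lemma ca_ta: "ca (ta c t) = (if ca t = 2 then ca t else - ca t)" by (simp add: ta_def)
lemma cb_ta: "cb (ta c t) = (if ca t = 2 then cb t else cb t - ca t * c)" by (simp add: ta_def)
lemma ch_ta: "ch (ta c t) = (if ca t = 2 then ch t else ch t - ca t)" by (simp add: ta_def)
lemma ca_tb: "ca (tb c t) = (if cb t = 2 then ca t else ca t - cb t * c)" by (simp add: tb_def)
lemma cb_tb: "cb (tb c t) = (if cb t = 2 then cb t else - cb t)" by (simp add: tb_def)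
lemma ch_tb: "ch (tb c t) = (if cb t = 2 then ch t else ch t - cb t)" by (simp add: tb_def)
lemmas tab_simps = ca_ta cb_ta ch_ta ca_tb cb_tb ch_tb
lemma trip_neq: "t \<noteq> s \<longleftrightarrow> ca t \<noteq> ca s \<or> cb t \<noteq> cb s \<or> ch t \<noteq> ch s"
  by (cases t; cases s) auto

lemma PC_m2_m2: assumes "PC c t s"
  shows "(20 + (8) * c + (-4) * (ca s - ca t) + (-4) * (cb s - cb t)) \<ge> 0 \<and> ((20 + (8) * c + (-4) * (ca s - ca t) + (-4) * (cb s - cb t)) = 0 \<longrightarrow> ca s = ca t - (-4) - (-2) * c \<and> cb s = cb t - (-2) * c - (-4) \<and> ch s = ch t - (-4) \<and> (-2) * ca t + (-2) * cb t = 2) \<and> ((20 + (8) * c + (-4) * (ca s - ca t) + (-4) * (cb s - cb t)) = 2 \<longrightarrow> ch s - ch t + (-4) \<noteq> 0)"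
  using assms[unfolded PC_def PCf_def, THEN spec[where x="-2"], THEN spec[where x="-2"]] by (simp add: algebra_simps)

lemma ZC_m2_m2: assumes "ZC c t s u"
  shows "(20 + (8) * c + (-4) * (ca s - ca t) + (-4) * (cb s - cb t)) = 0 \<longrightarrow> (-2) * ca u + (-2) * cb u = 0"
  using assms[unfolded ZC_def ZCf_def, THEN spec[where x="-2"], THEN spec[where x="-2"]] by (simp add: algebra_simps)

lemma PC_m2_m1: assumes "PC c t s"
  shows "(14 + (4) * c + (-4) * (ca s - ca t) + (-2) * (cb s - cb t)) \<ge> 0 \<and> ((14 + (4) * c + (-4) * (ca s - ca t) + (-2) * (cb s - cb t)) = 0 \<longrightarrow> ca s = ca t - (-4) - (-1) * c \<and> cb s = cb t - (-2) * c - (-2) \<and> ch s = ch t - (-3) \<and> (-2) * ca t + (-1) * cb t = 2) \<and> ((14 + (4) * c + (-4) * (ca s - ca t) + (-2) * (cb s - cb t)) = 2 \<longrightarrow> ch s - ch t + (-3) \<noteq> 0)"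
  using assms[unfolded PC_def PCf_def, THEN spec[where x="-2"], THEN spec[where x="-1"]] by (simp add: algebra_simps)

lemma ZC_m2_m1: assumes "ZC c t s u"
  shows "(14 + (4) * c + (-4) * (ca s - ca t) + (-2) * (cb s - cb t)) = 0 \<longrightarrow> (-2) * ca u + (-1) * cb u = 0"
  using assms[unfolded ZC_def ZCf_def, THEN spec[where x="-2"], THEN spec[where x="-1"]] by (simp add: algebra_simps)

lemma PC_m2_p0: assumes "PC c t s"
  shows "(12 + (-4) * (ca s - ca t)) \<ge> 0 \<and> ((12 + (-4) * (ca s - ca t)) = 0 \<longrightarrow> ca s = ca t - (-4) - (0) * c \<and> cb s = cb t - (-2) * c - (0) \<and> ch s = ch t - (-2) \<and> (-2) * ca t + (0) * cb t = 2) \<and> ((12 + (-4) * (ca s - ca t)) = 2 \<longrightarrow> ch s - ch t + (-2) \<noteq> 0)"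
  using assms[unfolded PC_def PCf_def, THEN spec[where x="-2"], THEN spec[where x="0"]] by (simp add: algebra_simps)

lemma ZC_m2_p0: assumes "ZC c t s u"
  shows "(12 + (-4) * (ca s - ca t)) = 0 \<longrightarrow> (-2) * ca u + (0) * cb u = 0"
  using assms[unfolded ZC_def ZCf_def, THEN spec[where x="-2"], THEN spec[where x="0"]] by (simp add: algebra_simps)

lemma PC_m2_p1: assumes "PC c t s"
  shows "(14 + (-4) * c + (-4) * (ca s - ca t) + (2) * (cb s - cb t)) \<ge> 0 \<and> ((14 + (-4) * c + (-4) * (ca s - ca t) + (2) * (cb s - cb t)) = 0 \<longrightarrow> ca s = ca t - (-4) - (1) * c \<and> cb s = cb t - (-2) * c - (2) \<and> ch s = ch t - (-1) \<and> (-2) * ca t + (1) * cb t = 2) \<and> ((14 + (-4) * c + (-4) * (ca s - ca t) + (2) * (cb s - cb t)) = 2 \<longrightarrow> ch s - ch t + (-1) \<noteq> 0)"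
  using assms[unfolded PC_def PCf_def, THEN spec[where x="-2"], THEN spec[where x="1"]] by (simp add: algebra_simps)

lemma ZC_m2_p1: assumes "ZC c t s u"
  shows "(14 + (-4) * c + (-4) * (ca s - ca t) + (2) * (cb s - cb t)) = 0 \<longrightarrow> (-2) * ca u + (1) * cb u = 0"
  using assms[unfolded ZC_def ZCf_def, THEN spec[where x="-2"], THEN spec[where x="1"]] by (simp add: algebra_simps)

lemma PC_m2_p2: assumes "PC c t s"
  shows "(20 + (-8) * c + (-4) * (ca s - ca t) + (4) * (cb s - cb t)) \<ge> 0 \<and> ((20 + (-8) * c + (-4) * (ca s - ca t) + (4) * (cb s - cb t)) = 0 \<longrightarrow> ca s = ca t - (-4) - (2) * c \<and> cb s = cb t - (-2) * c - (4) \<and> ch s = ch t - (0) \<and> (-2) * ca t + (2) * cb t = 2) \<and> ((20 + (-8) * c + (-4) * (ca s - ca t) + (4) * (cb s - cb t)) = 2 \<longrightarrow> ch s - ch t + (0) \<noteq> 0)"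
  using assms[unfolded PC_def PCf_def, THEN spec[where x="-2"], THEN spec[where x="2"]] by (simp add: algebra_simps)

lemma ZC_m2_p2: assumes "ZC c t s u"
  shows "(20 + (-8) * c + (-4) * (ca s - ca t) + (4) * (cb s - cb t)) = 0 \<longrightarrow> (-2) * ca u + (2) * cb u = 0"
  using assms[unfolded ZC_def ZCf_def, THEN spec[where x="-2"], THEN spec[where x="2"]] by (simp add: algebra_simps)

lemma PC_m1_m2: assumes "PC c t s"
  shows "(14 + (4) * c + (-2) * (ca s - ca t) + (-4) * (cb s - cb t)) \<ge> 0 \<and> ((14 + (4) * c + (-2) * (ca s - ca t) + (-4) * (cb s - cb t)) = 0 \<longrightarrow> ca s = ca t - (-2) - (-2) * c \<and> cb s = cb t - (-1) * c - (-4) \<and> ch s = ch t - (-3) \<and> (-1) * ca t + (-2) * cb t = 2) \<and> ((14 + (4) * c + (-2) * (ca s - ca t) + (-4) * (cb s - cb t)) = 2 \<longrightarrow> ch s - ch t + (-3) \<noteq> 0)"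
  using assms[unfolded PC_def PCf_def, THEN spec[where x="-1"], THEN spec[where x="-2"]] by (simp add: algebra_simps)

lemma ZC_m1_m2: assumes "ZC c t s u"
  shows "(14 + (4) * c + (-2) * (ca s - ca t) + (-4) * (cb s - cb t)) = 0 \<longrightarrow> (-1) * ca u + (-2) * cb u = 0"
  using assms[unfolded ZC_def ZCf_def, THEN spec[where x="-1"], THEN spec[where x="-2"]] by (simp add: algebra_simps)

lemma PC_m1_m1: assumes "PC c t s"
  shows "(8 + (2) * c + (-2) * (ca s - ca t) + (-2) * (cb s - cb t)) \<ge> 0 \<and> ((8 + (2) * c + (-2) * (ca s - ca t) + (-2) * (cb s - cb t)) = 0 \<longrightarrow> ca s = ca t - (-2) - (-1) * c \<and> cb s = cb t - (-1) * c - (-2) \<and> ch s = ch t - (-2) \<and> (-1) * ca t + (-1) * cb t = 2) \<and> ((8 + (2) * c + (-2) * (ca s - ca t) + (-2) * (cb s - cb t)) = 2 \<longrightarrow> ch s - ch t + (-2) \<noteq> 0)"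
  using assms[unfolded PC_def PCf_def, THEN spec[where x="-1"], THEN spec[where x="-1"]] by (simp add: algebra_simps)

lemma ZC_m1_m1: assumes "ZC c t s u"
  shows "(8 + (2) * c + (-2) * (ca s - ca t) + (-2) * (cb s - cb t)) = 0 \<longrightarrow> (-1) * ca u + (-1) * cb u = 0"
  using assms[unfolded ZC_def ZCf_def, THEN spec[where x="-1"], THEN spec[where x="-1"]] by (simp add: algebra_simps)

lemma PC_m1_p0: assumes "PC c t s"
  shows "(6 + (-2) * (ca s - ca t)) \<ge> 0 \<and> ((6 + (-2) * (ca s - ca t)) = 0 \<longrightarrow> ca s = ca t - (-2) - (0) * c \<and> cb s = cb t - (-1) * c - (0) \<and> ch s = ch t - (-1) \<and> (-1) * ca t + (0) * cb t = 2) \<and> ((6 + (-2) * (ca s - ca t)) = 2 \<longrightarrow> ch s - ch t + (-1) \<noteq> 0)"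
  using assms[unfolded PC_def PCf_def, THEN spec[where x="-1"], THEN spec[where x="0"]] by (simp add: algebra_simps)

lemma ZC_m1_p0: assumes "ZC c t s u"
  shows "(6 + (-2) * (ca s - ca t)) = 0 \<longrightarrow> (-1) * ca u + (0) * cb u = 0"
  using assms[unfolded ZC_def ZCf_def, THEN spec[where x="-1"], THEN spec[where x="0"]] by (simp add: algebra_simps)

lemma PC_m1_p1: assumes "PC c t s"
  shows "(8 + (-2) * c + (-2) * (ca s - ca t) + (2) * (cb s - cb t)) \<ge> 0 \<and> ((8 + (-2) * c + (-2) * (ca s - ca t) + (2) * (cb s - cb t)) = 0 \<longrightarrow> ca s = ca t - (-2) - (1) * c \<and> cb s = cb t - (-1) * c - (2) \<and> ch s = ch t - (0) \<and> (-1) * ca t + (1) * cb t = 2) \<and> ((8 + (-2) * c + (-2) * (ca s - ca t) + (2) * (cb s - cb t)) = 2 \<longrightarrow> ch s - ch t + (0) \<noteq> 0)"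
  using assms[unfolded PC_def PCf_def, THEN spec[where x="-1"], THEN spec[where x="1"]] by (simp add: algebra_simps)

lemma ZC_m1_p1: assumes "ZC c t s u"
  shows "(8 + (-2) * c + (-2) * (ca s - ca t) + (2) * (cb s - cb t)) = 0 \<longrightarrow> (-1) * ca u + (1) * cb u = 0"
  using assms[unfolded ZC_def ZCf_def, THEN spec[where x="-1"], THEN spec[where x="1"]] by (simp add: algebra_simps)

lemma PC_m1_p2: assumes "PC c t s"
  shows "(14 + (-4) * c + (-2) * (ca s - ca t) + (4) * (cb s - cb t)) \<ge> 0 \<and> ((14 + (-4) * c + (-2) * (ca s - ca t) + (4) * (cb s - cb t)) = 0 \<longrightarrow> ca s = ca t - (-2) - (2) * c \<and> cb s = cb t - (-1) * c - (4) \<and> ch s = ch t - (1) \<and> (-1) * ca t + (2) * cb t = 2) \<and> ((14 + (-4) * c + (-2) * (ca s - ca t) + (4) * (cb s - cb t)) = 2 \<longrightarrow> ch s - ch t + (1) \<noteq> 0)"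
  using assms[unfolded PC_def PCf_def, THEN spec[where x="-1"], THEN spec[where x="2"]] by (simp add: algebra_simps)

lemma ZC_m1_p2: assumes "ZC c t s u"
  shows "(14 + (-4) * c + (-2) * (ca s - ca t) + (4) * (cb s - cb t)) = 0 \<longrightarrow> (-1) * ca u + (2) * cb u = 0"
  using assms[unfolded ZC_def ZCf_def, THEN spec[where x="-1"], THEN spec[where x="2"]] by (simp add: algebra_simps)

lemma PC_p0_m2: assumes "PC c t s"
  shows "(12 + (-4) * (cb s - cb t)) \<ge> 0 \<and> ((12 + (-4) * (cb s - cb t)) = 0 \<longrightarrow> ca s = ca t - (0) - (-2) * c \<and> cb s = cb t - (0) * c - (-4) \<and> ch s = ch t - (-2) \<and> (0) * ca t + (-2) * cb t = 2) \<and> ((12 + (-4) * (cb s - cb t)) = 2 \<longrightarrow> ch s - ch t + (-2) \<noteq> 0)"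
  using assms[unfolded PC_def PCf_def, THEN spec[where x="0"], THEN spec[where x="-2"]] by (simp add: algebra_simps)

lemma ZC_p0_m2: assumes "ZC c t s u"
  shows "(12 + (-4) * (cb s - cb t)) = 0 \<longrightarrow> (0) * ca u + (-2) * cb u = 0"
  using assms[unfolded ZC_def ZCf_def, THEN spec[where x="0"], THEN spec[where x="-2"]] by (simp add: algebra_simps)

lemma PC_p0_m1: assumes "PC c t s"
  shows "(6 + (-2) * (cb s - cb t)) \<ge> 0 \<and> ((6 + (-2) * (cb s - cb t)) = 0 \<longrightarrow> ca s = ca t - (0) - (-1) * c \<and> cb s = cb t - (0) * c - (-2) \<and> ch s = ch t - (-1) \<and> (0) * ca t + (-1) * cb t = 2) \<and> ((6 + (-2) * (cb s - cb t)) = 2 \<longrightarrow> ch s - ch t + (-1) \<noteq> 0)"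
  using assms[unfolded PC_def PCf_def, THEN spec[where x="0"], THEN spec[where x="-1"]] by (simp add: algebra_simps)

lemma ZC_p0_m1: assumes "ZC c t s u"
  shows "(6 + (-2) * (cb s - cb t)) = 0 \<longrightarrow> (0) * ca u + (-1) * cb u = 0"
  using assms[unfolded ZC_def ZCf_def, THEN spec[where x="0"], THEN spec[where x="-1"]] by (simp add: algebra_simps)

lemma PC_p0_p1: assumes "PC c t s"
  shows "(6 + (2) * (cb s - cb t)) \<ge> 0 \<and> ((6 + (2) * (cb s - cb t)) = 0 \<longrightarrow> ca s = ca t - (0) - (1) * c \<and> cb s = cb t - (0) * c - (2) \<and> ch s = ch t - (1) \<and> (0) * ca t + (1) * cb t = 2) \<and> ((6 + (2) * (cb s - cb t)) = 2 \<longrightarrow> ch s - ch t + (1) \<noteq> 0)"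
  using assms[unfolded PC_def PCf_def, THEN spec[where x="0"], THEN spec[where x="1"]] by (simp add: algebra_simps)

lemma ZC_p0_p1: assumes "ZC c t s u"
  shows "(6 + (2) * (cb s - cb t)) = 0 \<longrightarrow> (0) * ca u + (1) * cb u = 0"
  using assms[unfolded ZC_def ZCf_def, THEN spec[where x="0"], THEN spec[where x="1"]] by (simp add: algebra_simps)

lemma PC_p0_p2: assumes "PC c t s"
  shows "(12 + (4) * (cb s - cb t)) \<ge> 0 \<and> ((12 + (4) * (cb s - cb t)) = 0 \<longrightarrow> ca s = ca t - (0) - (2) * c \<and> cb s = cb t - (0) * c - (4) \<and> ch s = ch t - (2) \<and> (0) * ca t + (2) * cb t = 2) \<and> ((12 + (4) * (cb s - cb t)) = 2 \<longrightarrow> ch s - ch t + (2) \<noteq> 0)"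
  using assms[unfolded PC_def PCf_def, THEN spec[where x="0"], THEN spec[where x="2"]] by (simp add: algebra_simps)

lemma ZC_p0_p2: assumes "ZC c t s u"
  shows "(12 + (4) * (cb s - cb t)) = 0 \<longrightarrow> (0) * ca u + (2) * cb u = 0"
  using assms[unfolded ZC_def ZCf_def, THEN spec[where x="0"], THEN spec[where x="2"]] by (simp add: algebra_simps)

lemma PC_p1_m2: assumes "PC c t s"
  shows "(14 + (-4) * c + (2) * (ca s - ca t) + (-4) * (cb s - cb t)) \<ge> 0 \<and> ((14 + (-4) * c + (2) * (ca s - ca t) + (-4) * (cb s - cb t)) = 0 \<longrightarrow> ca s = ca t - (2) - (-2) * c \<and> cb s = cb t - (1) * c - (-4) \<and> ch s = ch t - (-1) \<and> (1) * ca t + (-2) * cb t = 2) \<and> ((14 + (-4) * c + (2) * (ca s - ca t) + (-4) * (cb s - cb t)) = 2 \<longrightarrow> ch s - ch t + (-1) \<noteq> 0)"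
  using assms[unfolded PC_def PCf_def, THEN spec[where x="1"], THEN spec[where x="-2"]] by (simp add: algebra_simps)

lemma ZC_p1_m2: assumes "ZC c t s u"
  shows "(14 + (-4) * c + (2) * (ca s - ca t) + (-4) * (cb s - cb t)) = 0 \<longrightarrow> (1) * ca u + (-2) * cb u = 0"
  using assms[unfolded ZC_def ZCf_def, THEN spec[where x="1"], THEN spec[where x="-2"]] by (simp add: algebra_simps)

lemma PC_p1_m1: assumes "PC c t s"
  shows "(8 + (-2) * c + (2) * (ca s - ca t) + (-2) * (cb s - cb t)) \<ge> 0 \<and> ((8 + (-2) * c + (2) * (ca s - ca t) + (-2) * (cb s - cb t)) = 0 \<longrightarrow> ca s = ca t - (2) - (-1) * c \<and> cb s = cb t - (1) * c - (-2) \<and> ch s = ch t - (0) \<and> (1) * ca t + (-1) * cb t = 2) \<and> ((8 + (-2) * c + (2) * (ca s - ca t) + (-2) * (cb s - cb t)) = 2 \<longrightarrow> ch s - ch t + (0) \<noteq> 0)"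
  using assms[unfolded PC_def PCf_def, THEN spec[where x="1"], THEN spec[where x="-1"]] by (simp add: algebra_simps)

lemma ZC_p1_m1: assumes "ZC c t s u"
  shows "(8 + (-2) * c + (2) * (ca s - ca t) + (-2) * (cb s - cb t)) = 0 \<longrightarrow> (1) * ca u + (-1) * cb u = 0"
  using assms[unfolded ZC_def ZCf_def, THEN spec[where x="1"], THEN spec[where x="-1"]] by (simp add: algebra_simps)

lemma PC_p1_p0: assumes "PC c t s"
  shows "(6 + (2) * (ca s - ca t)) \<ge> 0 \<and> ((6 + (2) * (ca s - ca t)) = 0 \<longrightarrow> ca s = ca t - (2) - (0) * c \<and> cb s = cb t - (1) * c - (0) \<and> ch s = ch t - (1) \<and> (1) * ca t + (0) * cb t = 2) \<and> ((6 + (2) * (ca s - ca t)) = 2 \<longrightarrow> ch s - ch t + (1) \<noteq> 0)"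
  using assms[unfolded PC_def PCf_def, THEN spec[where x="1"], THEN spec[where x="0"]] by (simp add: algebra_simps)

lemma ZC_p1_p0: assumes "ZC c t s u"
  shows "(6 + (2) * (ca s - ca t)) = 0 \<longrightarrow> (1) * ca u + (0) * cb u = 0"
  using assms[unfolded ZC_def ZCf_def, THEN spec[where x="1"], THEN spec[where x="0"]] by (simp add: algebra_simps)

lemma PC_p1_p1: assumes "PC c t s"
  shows "(8 + (2) * c + (2) * (ca s - ca t) + (2) * (cb s - cb t)) \<ge> 0 \<and> ((8 + (2) * c + (2) * (ca s - ca t) + (2) * (cb s - cb t)) = 0 \<longrightarrow> ca s = ca t - (2) - (1) * c \<and> cb s = cb t - (1) * c - (2) \<and> ch s = ch t - (2) \<and> (1) * ca t + (1) * cb t = 2) \<and> ((8 + (2) * c + (2) * (ca s - ca t) + (2) * (cb s - cb t)) = 2 \<longrightarrow> ch s - ch t + (2) \<noteq> 0)"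
  using assms[unfolded PC_def PCf_def, THEN spec[where x="1"], THEN spec[where x="1"]] by (simp add: algebra_simps)

lemma ZC_p1_p1: assumes "ZC c t s u"
  shows "(8 + (2) * c + (2) * (ca s - ca t) + (2) * (cb s - cb t)) = 0 \<longrightarrow> (1) * ca u + (1) * cb u = 0"
  using assms[unfolded ZC_def ZCf_def, THEN spec[where x="1"], THEN spec[where x="1"]] by (simp add: algebra_simps)

lemma PC_p1_p2: assumes "PC c t s"
  shows "(14 + (4) * c + (2) * (ca s - ca t) + (4) * (cb s - cb t)) \<ge> 0 \<and> ((14 + (4) * c + (2) * (ca s - ca t) + (4) * (cb s - cb t)) = 0 \<longrightarrow> ca s = ca t - (2) - (2) * c \<and> cb s = cb t - (1) * c - (4) \<and> ch s = ch t - (3) \<and> (1) * ca t + (2) * cb t = 2) \<and> ((14 + (4) * c + (2) * (ca s - ca t) + (4) * (cb s - cb t)) = 2 \<longrightarrow> ch s - ch t + (3) \<noteq> 0)"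
  using assms[unfolded PC_def PCf_def, THEN spec[where x="1"], THEN spec[where x="2"]] by (simp add: algebra_simps)

lemma ZC_p1_p2: assumes "ZC c t s u"
  shows "(14 + (4) * c + (2) * (ca s - ca t) + (4) * (cb s - cb t)) = 0 \<longrightarrow> (1) * ca u + (2) * cb u = 0"
  using assms[unfolded ZC_def ZCf_def, THEN spec[where x="1"], THEN spec[where x="2"]] by (simp add: algebra_simps)

lemma PC_p2_m2: assumes "PC c t s"
  shows "(20 + (-8) * c + (4) * (ca s - ca t) + (-4) * (cb s - cb t)) \<ge> 0 \<and> ((20 + (-8) * c + (4) * (ca s - ca t) + (-4) * (cb s - cb t)) = 0 \<longrightarrow> ca s = ca t - (4) - (-2) * c \<and> cb s = cb t - (2) * c - (-4) \<and> ch s = ch t - (0) \<and> (2) * ca t + (-2) * cb t = 2) \<and> ((20 + (-8) * c + (4) * (ca s - ca t) + (-4) * (cb s - cb t)) = 2 \<longrightarrow> ch s - ch t + (0) \<noteq> 0)"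
  using assms[unfolded PC_def PCf_def, THEN spec[where x="2"], THEN spec[where x="-2"]] by (simp add: algebra_simps)

lemma ZC_p2_m2: assumes "ZC c t s u"
  shows "(20 + (-8) * c + (4) * (ca s - ca t) + (-4) * (cb s - cb t)) = 0 \<longrightarrow> (2) * ca u + (-2) * cb u = 0"
  using assms[unfolded ZC_def ZCf_def, THEN spec[where x="2"], THEN spec[where x="-2"]] by (simp add: algebra_simps)

lemma PC_p2_m1: assumes "PC c t s"
  shows "(14 + (-4) * c + (4) * (ca s - ca t) + (-2) * (cb s - cb t)) \<ge> 0 \<and> ((14 + (-4) * c + (4) * (ca s - ca t) + (-2) * (cb s - cb t)) = 0 \<longrightarrow> ca s = ca t - (4) - (-1) * c \<and> cb s = cb t - (2) * c - (-2) \<and> ch s = ch t - (1) \<and> (2) * ca t + (-1) * cb t = 2) \<and> ((14 + (-4) * c + (4) * (ca s - ca t) + (-2) * (cb s - cb t)) = 2 \<longrightarrow> ch s - ch t + (1) \<noteq> 0)"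
  using assms[unfolded PC_def PCf_def, THEN spec[where x="2"], THEN spec[where x="-1"]] by (simp add: algebra_simps)

lemma ZC_p2_m1: assumes "ZC c t s u"
  shows "(14 + (-4) * c + (4) * (ca s - ca t) + (-2) * (cb s - cb t)) = 0 \<longrightarrow> (2) * ca u + (-1) * cb u = 0"
  using assms[unfolded ZC_def ZCf_def, THEN spec[where x="2"], THEN spec[where x="-1"]] by (simp add: algebra_simps)

lemma PC_p2_p0: assumes "PC c t s"
  shows "(12 + (4) * (ca s - ca t)) \<ge> 0 \<and> ((12 + (4) * (ca s - ca t)) = 0 \<longrightarrow> ca s = ca t - (4) - (0) * c \<and> cb s = cb t - (2) * c - (0) \<and> ch s = ch t - (2) \<and> (2) * ca t + (0) * cb t = 2) \<and> ((12 + (4) * (ca s - ca t)) = 2 \<longrightarrow> ch s - ch t + (2) \<noteq> 0)"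
  using assms[unfolded PC_def PCf_def, THEN spec[where x="2"], THEN spec[where x="0"]] by (simp add: algebra_simps)

lemma ZC_p2_p0: assumes "ZC c t s u"
  shows "(12 + (4) * (ca s - ca t)) = 0 \<longrightarrow> (2) * ca u + (0) * cb u = 0"
  using assms[unfolded ZC_def ZCf_def, THEN spec[where x="2"], THEN spec[where x="0"]] by (simp add: algebra_simps)

lemma PC_p2_p1: assumes "PC c t s"
  shows "(14 + (4) * c + (4) * (ca s - ca t) + (2) * (cb s - cb t)) \<ge> 0 \<and> ((14 + (4) * c + (4) * (ca s - ca t) + (2) * (cb s - cb t)) = 0 \<longrightarrow> ca s = ca t - (4) - (1) * c \<and> cb s = cb t - (2) * c - (2) \<and> ch s = ch t - (3) \<and> (2) * ca t + (1) * cb t = 2) \<and> ((14 + (4) * c + (4) * (ca s - ca t) + (2) * (cb s - cb t)) = 2 \<longrightarrow> ch s - ch t + (3) \<noteq> 0)"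
  using assms[unfolded PC_def PCf_def, THEN spec[where x="2"], THEN spec[where x="1"]] by (simp add: algebra_simps)

lemma ZC_p2_p1: assumes "ZC c t s u"
  shows "(14 + (4) * c + (4) * (ca s - ca t) + (2) * (cb s - cb t)) = 0 \<longrightarrow> (2) * ca u + (1) * cb u = 0"
  using assms[unfolded ZC_def ZCf_def, THEN spec[where x="2"], THEN spec[where x="1"]] by (simp add: algebra_simps)

lemma PC_p2_p2: assumes "PC c t s"
  shows "(20 + (8) * c + (4) * (ca s - ca t) + (4) * (cb s - cb t)) \<ge> 0 \<and> ((20 + (8) * c + (4) * (ca s - ca t) + (4) * (cb s - cb t)) = 0 \<longrightarrow> ca s = ca t - (4) - (2) * c \<and> cb s = cb t - (2) * c - (4) \<and> ch s = ch t - (4) \<and> (2) * ca t + (2) * cb t = 2) \<and> ((20 + (8) * c + (4) * (ca s - ca t) + (4) * (cb s - cb t)) = 2 \<longrightarrow> ch s - ch t + (4) \<noteq> 0)"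
  using assms[unfolded PC_def PCf_def, THEN spec[where x="2"], THEN spec[where x="2"]] by (simp add: algebra_simps)

lemma ZC_p2_p2: assumes "ZC c t s u"
  shows "(20 + (8) * c + (4) * (ca s - ca t) + (4) * (cb s - cb t)) = 0 \<longrightarrow> (2) * ca u + (2) * cb u = 0"
  using assms[unfolded ZC_def ZCf_def, THEN spec[where x="2"], THEN spec[where x="2"]] by (simp add: algebra_simps)



lemma A3a: assumes G: "GOOD (-1) T"
  and H1: "UPa T"
  and H2: "UPb T"
  shows "UPb ((\<lambda>t. (ta ((-1)) t)) ` T)"
proof (rule ccontr)
  assume neg0: "\<not> ?thesis"
  have neg: "\<not> UPb ((\<lambda>t. (ta ((-1)) t)) ` T)" using neg0 by simp
  from H1 obtain u1 where u1: "u1 \<in> T" "ca u1 = -1" "\<forall>s\<in>T. ca s = 1 \<longrightarrow> ch u1 < ch s"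
    unfolding UPa_img UPa_def by blast
  from H2 obtain u2 where u2: "u2 \<in> T" "cb u2 = -1" "\<forall>s\<in>T. cb s = 1 \<longrightarrow> ch u2 < ch s"
    unfolding UPb_img UPb_def by blast
  from negUPb[OF GOOD_fin[OF G] neg] show False
  proof
    assume A: "\<forall>t\<in>T. cb (ta ((-1)) t) \<noteq> -1"
    have F_u1_u2: "OK (-1) u1 \<and> OK (-1) u2 \<and> (u1 \<noteq> u2 \<longrightarrow> SP (-1) u1 u2 \<and> SP (-1) u2 u1)" using GOOD2[OF G u1(1) u2(1)] by blast
    have I: "ca u1 = 1 \<longrightarrow> ch u1 < ch u1" "ca u2 = 1 \<longrightarrow> ch u1 < ch u2" "cb u1 = 1 \<longrightarrow> ch u2 < ch u1" "cb u2 = 1 \<longrightarrow> ch u2 < ch u2" "cb (ta ((-1)) u1) \<noteq> -1" "cb (ta ((-1)) u2) \<noteq> -1"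
      using u1 u2  A by auto
    show False using F_u1_u2 I u1(2) u2(2) unfolding OK_def SP_def tab_simps trip_neq
      by smt
  next
    assume "\<exists>d\<in>T. cb (ta ((-1)) d) = 1 \<and> (\<forall>t\<in>T. cb (ta ((-1)) t) = -1 \<longrightarrow> ch (ta ((-1)) d) \<le> ch (ta ((-1)) t))"
    then obtain d where d: "d \<in> T" "cb (ta ((-1)) d) = 1" "\<forall>t\<in>T. cb (ta ((-1)) t) = -1 \<longrightarrow> ch (ta ((-1)) d) \<le> ch (ta ((-1)) t)" by blast
    have F_u1_u2: "OK (-1) u1 \<and> OK (-1) u2 \<and> (u1 \<noteq> u2 \<longrightarrow> SP (-1) u1 u2 \<and> SP (-1) u2 u1)" using GOOD2[OF G u1(1) u2(1)] by blast
    have F_u1_d: "OK (-1) u1 \<and> OK (-1) d \<and> (u1 \<noteq> d \<longrightarrow> SP (-1) u1 d \<and> SP (-1) d u1)" using GOOD2[OF G u1(1) d(1)] by blast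
    have F_u2_d: "OK (-1) u2 \<and> OK (-1) d \<and> (u2 \<noteq> d \<longrightarrow> SP (-1) u2 d \<and> SP (-1) d u2)" using GOOD2[OF G u2(1) d(1)] by blast
    have I: "ca u1 = 1 \<longrightarrow> ch u1 < ch u1" "ca u2 = 1 \<longrightarrow> ch u1 < ch u2" "ca d = 1 \<longrightarrow> ch u1 < ch d" "cb u1 = 1 \<longrightarrow> ch u2 < ch u1" "cb u2 = 1 \<longrightarrow> ch u2 < ch u2" "cb d = 1 \<longrightarrow> ch u2 < ch d" "cb (ta ((-1)) u1) = -1 \<longrightarrow> ch (ta ((-1)) d) \<le> ch (ta ((-1)) u1)" "cb (ta ((-1)) u2) = -1 \<longrightarrow> ch (ta ((-1)) d) \<le> ch (ta ((-1)) u2)" "cb (ta ((-1)) d) = -1 \<longrightarrow> ch (ta ((-1)) d) \<le> ch (ta ((-1)) d)"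
      using u1 u2  d by auto
    have P0: "u1 \<noteq> d \<longrightarrow> PC (-1) u1 d" using GOOD2[OF G u1(1) d(1)] by blast
    have P1: "u1 \<noteq> d \<longrightarrow> PC (-1) u1 d" using GOOD2[OF G u1(1) d(1)] by blast
    show False using F_u1_u2 F_u1_d F_u2_d I P0 PC_m1_p0[of "-1" u1 d] P1 PC_m1_m1[of "-1" u1 d] u1(2) u2(2) d(2) unfolding OK_def SP_def tab_simps trip_neq
      by smt
  qed
qed

lemma A3b: assumes G: "GOOD (-1) T"
  and H1: "UPa T"
  and H2: "UPb T"
  and H3: "UPb ((\<lambda>t. (ta ((-1)) t)) ` T)"
  shows "UPa ((\<lambda>t. (tb ((-1)) (ta ((-1)) t))) ` T)"
proof (rule ccontr)
  assume neg0: "\<not> ?thesis"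
  have neg: "\<not> UPa ((\<lambda>t. (tb ((-1)) (ta ((-1)) t))) ` T)" using neg0 by simp
  from H1 obtain u1 where u1: "u1 \<in> T" "ca u1 = -1" "\<forall>s\<in>T. ca s = 1 \<longrightarrow> ch u1 < ch s"
    unfolding UPa_img UPa_def by blast
  from H2 obtain u2 where u2: "u2 \<in> T" "cb u2 = -1" "\<forall>s\<in>T. cb s = 1 \<longrightarrow> ch u2 < ch s"
    unfolding UPb_img UPb_def by blast
  from H3 obtain u3 where u3: "u3 \<in> T" "cb (ta ((-1)) u3) = -1" "\<forall>s\<in>T. cb (ta ((-1)) s) = 1 \<longrightarrow> ch (ta ((-1)) u3) < ch (ta ((-1)) s)"
    unfolding UPb_img UPb_def by blast
  from negUPa[OF GOOD_fin[OF G] neg] show False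
  proof
    assume A: "\<forall>t\<in>T. ca (tb ((-1)) (ta ((-1)) t)) \<noteq> -1"
    have F_u1_u2: "OK (-1) u1 \<and> OK (-1) u2 \<and> (u1 \<noteq> u2 \<longrightarrow> SP (-1) u1 u2 \<and> SP (-1) u2 u1)" using GOOD2[OF G u1(1) u2(1)] by blast
    have F_u1_u3: "OK (-1) u1 \<and> OK (-1) u3 \<and> (u1 \<noteq> u3 \<longrightarrow> SP (-1) u1 u3 \<and> SP (-1) u3 u1)" using GOOD2[OF G u1(1) u3(1)] by blast
    have F_u2_u3: "OK (-1) u2 \<and> OK (-1) u3 \<and> (u2 \<noteq> u3 \<longrightarrow> SP (-1) u2 u3 \<and> SP (-1) u3 u2)" using GOOD2[OF G u2(1) u3(1)] by blast
    have I: "ca u1 = 1 \<longrightarrow> ch u1 < ch u1" "ca u2 = 1 \<longrightarrow> ch u1 < ch u2" "ca u3 = 1 \<longrightarrow> ch u1 < ch u3" "cb u1 = 1 \<longrightarrow> ch u2 < ch u1" "cb u2 = 1 \<longrightarrow> ch u2 < ch u2" "cb u3 = 1 \<longrightarrow> ch u2 < ch u3" "cb (ta ((-1)) u1) = 1 \<longrightarrow> ch (ta ((-1)) u3) < ch (ta ((-1)) u1)" "cb (ta ((-1)) u2) = 1 \<longrightarrow> ch (ta ((-1)) u3) < ch (ta ((-1)) u2)" "cb (ta ((-1)) u3) = 1 \<longrightarrow> ch (ta ((-1)) u3) < ch (ta ((-1)) u3)" "ca (tb ((-1)) (ta ((-1)) u1)) \<noteq> -1" "ca (tb ((-1)) (ta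 ((-1)) u2)) \<noteq> -1" "ca (tb ((-1)) (ta ((-1)) u3)) \<noteq> -1"
      using u1 u2 u3  A by auto
    show False using F_u1_u2 F_u1_u3 F_u2_u3 I u1(2) u2(2) u3(2) unfolding OK_def SP_def tab_simps trip_neq
      by smt
  next
    assume "\<exists>d\<in>T. ca (tb ((-1)) (ta ((-1)) d)) = 1 \<and> (\<forall>t\<in>T. ca (tb ((-1)) (ta ((-1)) t)) = -1 \<longrightarrow> ch (tb ((-1)) (ta ((-1)) d)) \<le> ch (tb ((-1)) (ta ((-1)) t)))"
    then obtain d where d: "d \<in> T" "ca (tb ((-1)) (ta ((-1)) d)) = 1" "\<forall>t\<in>T. ca (tb ((-1)) (ta ((-1)) t)) = -1 \<longrightarrow> ch (tb ((-1)) (ta ((-1)) d)) \<le> ch (tb ((-1)) (ta ((-1)) t))" by blast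
    have F_u1_u2: "OK (-1) u1 \<and> OK (-1) u2 \<and> (u1 \<noteq> u2 \<longrightarrow> SP (-1) u1 u2 \<and> SP (-1) u2 u1)" using GOOD2[OF G u1(1) u2(1)] by blast
    have F_u1_u3: "OK (-1) u1 \<and> OK (-1) u3 \<and> (u1 \<noteq> u3 \<longrightarrow> SP (-1) u1 u3 \<and> SP (-1) u3 u1)" using GOOD2[OF G u1(1) u3(1)] by blast
    have F_u1_d: "OK (-1) u1 \<and> OK (-1) d \<and> (u1 \<noteq> d \<longrightarrow> SP (-1) u1 d \<and> SP (-1) d u1)" using GOOD2[OF G u1(1) d(1)] by blast
    have F_u2_u3: "OK (-1) u2 \<and> OK (-1) u3 \<and> (u2 \<noteq> u3 \<longrightarrow> SP (-1) u2 u3 \<and> SP (-1) u3 u2)" using GOOD2[OF G u2(1) u3(1)] by blast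
    have F_u2_d: "OK (-1) u2 \<and> OK (-1) d \<and> (u2 \<noteq> d \<longrightarrow> SP (-1) u2 d \<and> SP (-1) d u2)" using GOOD2[OF G u2(1) d(1)] by blast
    have F_u3_d: "OK (-1) u3 \<and> OK (-1) d \<and> (u3 \<noteq> d \<longrightarrow> SP (-1) u3 d \<and> SP (-1) d u3)" using GOOD2[OF G u3(1) d(1)] by blast
    have I: "ca u1 = 1 \<longrightarrow> ch u1 < ch u1" "ca u2 = 1 \<longrightarrow> ch u1 < ch u2" "ca u3 = 1 \<longrightarrow> ch u1 < ch u3" "ca d = 1 \<longrightarrow> ch u1 < ch d" "cb u1 = 1 \<longrightarrow> ch u2 < ch u1" "cb u2 = 1 \<longrightarrow> ch u2 < ch u2" "cb u3 = 1 \<longrightarrow> ch u2 < ch u3" "cb d = 1 \<longrightarrow> ch u2 < ch d" "cb (ta ((-1)) u1) = 1 \<longrightarrow> ch (ta ((-1)) u3) < ch (ta ((-1)) u1)" "cb (ta ((-1)) u2) = 1 \<longrightarrow> ch (ta ((-1)) u3) < ch (ta ((-1)) u2)" "cb (ta ((-1)) u3) = 1 \<longrightarrow> ch (ta ((-1)) u3) < ch (ta ((-1)) u3)" "cb (ta ((-1)) d) = 1 \<longrightarrow> ch (ta ((-1)) u3) < ch (ta ((-1)) d)" "ca (tb ((-1)) (ta ((-1)) u1)) = -1 \<longrightarrow> ch (tb ((-1)) (ta ((-1)) d)) \<le> ch (tb ((-1)) (ta ((-1)) u1))" "ca (tb ((-1)) (ta ((-1)) u2)) = -1 \<longrightarrow>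 ch (tb ((-1)) (ta ((-1)) d)) \<le> ch (tb ((-1)) (ta ((-1)) u2))" "ca (tb ((-1)) (ta ((-1)) u3)) = -1 \<longrightarrow> ch (tb ((-1)) (ta ((-1)) d)) \<le> ch (tb ((-1)) (ta ((-1)) u3))" "ca (tb ((-1)) (ta ((-1)) d)) = -1 \<longrightarrow> ch (tb ((-1)) (ta ((-1)) d)) \<le> ch (tb ((-1)) (ta ((-1)) d))"
      using u1 u2 u3  d by auto
    have P0: "u2 \<noteq> d \<longrightarrow> PC (-1) u2 d" using GOOD2[OF G u2(1) d(1)] by blast
    have P1: "u2 \<noteq> d \<longrightarrow> PC (-1) u2 d" using GOOD2[OF G u2(1) d(1)] by blast
    show False using F_u1_u2 F_u1_u3 F_u1_d F_u2_u3 F_u2_d F_u3_d I P0 PC_m1_m1[of "-1" u2 d] P1 PC_p0_m1[of "-1" u2 d] u1(2) u2(2) u3(2) d(2) unfolding OK_def SP_def tab_simps trip_neq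
      by smt
  qed
qed

lemma A4a: assumes G: "GOOD (-1) T"
  and H1: "UPa T"
  and H2: "UPb ((\<lambda>t. (ta ((-1)) t)) ` T)"
  and H3: "UPa ((\<lambda>t. (tb ((-1)) (ta ((-1)) t))) ` T)"
  shows "UPb T"
proof (rule ccontr)
  assume neg0: "\<not> ?thesis"
  have neg: "\<not> UPb ((\<lambda>t. t) ` T)" using neg0 by simp
  from H1 obtain u1 where u1: "u1 \<in> T" "ca u1 = -1" "\<forall>s\<in>T. ca s = 1 \<longrightarrow> ch u1 < ch s"
    unfolding UPa_img UPa_def by blast
  from H2 obtain u2 where u2: "u2 \<in> T" "cb (ta ((-1)) u2) = -1" "\<forall>s\<in>T. cb (ta ((-1)) s) = 1 \<longrightarrow> ch (ta ((-1)) u2) < ch (ta ((-1)) s)"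
    unfolding UPb_img UPb_def by blast
  from H3 obtain u3 where u3: "u3 \<in> T" "ca (tb ((-1)) (ta ((-1)) u3)) = -1" "\<forall>s\<in>T. ca (tb ((-1)) (ta ((-1)) s)) = 1 \<longrightarrow> ch (tb ((-1)) (ta ((-1)) u3)) < ch (tb ((-1)) (ta ((-1)) s))"
    unfolding UPa_img UPa_def by blast
  from negUPb[OF GOOD_fin[OF G] neg] show False
  proof
    assume A: "\<forall>t\<in>T. cb t \<noteq> -1"
    have F_u1_u2: "OK (-1) u1 \<and> OK (-1) u2 \<and> (u1 \<noteq> u2 \<longrightarrow> SP (-1) u1 u2 \<and> SP (-1) u2 u1)" using GOOD2[OF G u1(1) u2(1)] by blast
    have F_u1_u3: "OK (-1) u1 \<and> OK (-1) u3 \<and> (u1 \<noteq> u3 \<longrightarrow> SP (-1) u1 u3 \<and> SP (-1) u3 u1)" using GOOD2[OF G u1(1) u3(1)] by blast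
    have F_u2_u3: "OK (-1) u2 \<and> OK (-1) u3 \<and> (u2 \<noteq> u3 \<longrightarrow> SP (-1) u2 u3 \<and> SP (-1) u3 u2)" using GOOD2[OF G u2(1) u3(1)] by blast
    have I: "ca u1 = 1 \<longrightarrow> ch u1 < ch u1" "ca u2 = 1 \<longrightarrow> ch u1 < ch u2" "ca u3 = 1 \<longrightarrow> ch u1 < ch u3" "cb (ta ((-1)) u1) = 1 \<longrightarrow> ch (ta ((-1)) u2) < ch (ta ((-1)) u1)" "cb (ta ((-1)) u2) = 1 \<longrightarrow> ch (ta ((-1)) u2) < ch (ta ((-1)) u2)" "cb (ta ((-1)) u3) = 1 \<longrightarrow> ch (ta ((-1)) u2) < ch (ta ((-1)) u3)" "ca (tb ((-1)) (ta ((-1)) u1)) = 1 \<longrightarrow> ch (tb ((-1)) (ta ((-1)) u3)) < ch (tb ((-1)) (ta ((-1)) u1))" "ca (tb ((-1)) (ta ((-1)) u2)) = 1 \<longrightarrow> ch (tb ((-1)) (ta ((-1)) u3)) < ch (tb ((-1)) (ta ((-1)) u2))" "ca (tb ((-1)) (ta ((-1)) u3)) = 1 \<longrightarrow> ch (tb ((-1)) (ta ((-1)) u3)) < ch (tb ((-1)) (ta ((-1)) u3))" "cb u1 \<noteq> -1" "cb u2 \<noteq> -1" "cb u3 \<noteq> -1"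
      using u1 u2 u3  A by auto
    show False using F_u1_u2 F_u1_u3 F_u2_u3 I u1(2) u2(2) u3(2) unfolding OK_def SP_def tab_simps trip_neq
      by smt
  next
    assume "\<exists>d\<in>T. cb d = 1 \<and> (\<forall>t\<in>T. cb t = -1 \<longrightarrow> ch d \<le> ch t)"
    then obtain d where d: "d \<in> T" "cb d = 1" "\<forall>t\<in>T. cb t = -1 \<longrightarrow> ch d \<le> ch t" by blast
    have F_u1_u2: "OK (-1) u1 \<and> OK (-1) u2 \<and> (u1 \<noteq> u2 \<longrightarrow> SP (-1) u1 u2 \<and> SP (-1) u2 u1)" using GOOD2[OF G u1(1) u2(1)] by blast
    have F_u1_u3: "OK (-1) u1 \<and> OK (-1) u3 \<and> (u1 \<noteq> u3 \<longrightarrow> SP (-1) u1 u3 \<and> SP (-1) u3 u1)" using GOOD2[OF G u1(1) u3(1)] by blast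
    have F_u1_d: "OK (-1) u1 \<and> OK (-1) d \<and> (u1 \<noteq> d \<longrightarrow> SP (-1) u1 d \<and> SP (-1) d u1)" using GOOD2[OF G u1(1) d(1)] by blast
    have F_u2_u3: "OK (-1) u2 \<and> OK (-1) u3 \<and> (u2 \<noteq> u3 \<longrightarrow> SP (-1) u2 u3 \<and> SP (-1) u3 u2)" using GOOD2[OF G u2(1) u3(1)] by blast
    have F_u2_d: "OK (-1) u2 \<and> OK (-1) d \<and> (u2 \<noteq> d \<longrightarrow> SP (-1) u2 d \<and> SP (-1) d u2)" using GOOD2[OF G u2(1) d(1)] by blast
    have F_u3_d: "OK (-1) u3 \<and> OK (-1) d \<and> (u3 \<noteq> d \<longrightarrow> SP (-1) u3 d \<and> SP (-1) d u3)" using GOOD2[OF G u3(1) d(1)] by blast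
    have I: "ca u1 = 1 \<longrightarrow> ch u1 < ch u1" "ca u2 = 1 \<longrightarrow> ch u1 < ch u2" "ca u3 = 1 \<longrightarrow> ch u1 < ch u3" "ca d = 1 \<longrightarrow> ch u1 < ch d" "cb (ta ((-1)) u1) = 1 \<longrightarrow> ch (ta ((-1)) u2) < ch (ta ((-1)) u1)" "cb (ta ((-1)) u2) = 1 \<longrightarrow> ch (ta ((-1)) u2) < ch (ta ((-1)) u2)" "cb (ta ((-1)) u3) = 1 \<longrightarrow> ch (ta ((-1)) u2) < ch (ta ((-1)) u3)" "cb (ta ((-1)) d) = 1 \<longrightarrow> ch (ta ((-1)) u2) < ch (ta ((-1)) d)" "ca (tb ((-1)) (ta ((-1)) u1)) = 1 \<longrightarrow> ch (tb ((-1)) (ta ((-1)) u3)) < ch (tb ((-1)) (ta ((-1)) u1))" "ca (tb ((-1)) (ta ((-1)) u2)) = 1 \<longrightarrow> ch (tb ((-1)) (ta ((-1)) u3)) < ch (tb ((-1)) (ta ((-1)) u2))" "ca (tb ((-1)) (ta ((-1)) u3)) = 1 \<longrightarrow> ch (tb ((-1)) (ta ((-1)) u3)) < ch (tb ((-1)) (ta ((-1)) u3))" "ca (tb ((-1)) (ta ((-1)) d)) = 1 \<longrightarrow> ch (tb ((-1)) (ta ((-1)) u3)) < ch (tb ((-1)) (ta ((-1)) d))" "cb u1 = -1 \<longrightarrow> ch d \<le> ch u1" "cb u2 = -1 \<longrightarrow> ch d \<le> ch u2" "cb u3 = -1 \<longrightarrow> ch d \<le> ch u3" "cb d = -1 \<longrightarrow>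 ch d \<le> ch d"
      using u1 u2 u3  d by auto
    have P0: "u3 \<noteq> d \<longrightarrow> PC (-1) u3 d" using GOOD2[OF G u3(1) d(1)] by blast
    have P1: "u3 \<noteq> d \<longrightarrow> PC (-1) u3 d" using GOOD2[OF G u3(1) d(1)] by blast
    show False using F_u1_u2 F_u1_u3 F_u1_d F_u2_u3 F_u2_d F_u3_d I P0 PC_p1_p0[of "-1" u3 d] P1 PC_p1_m1[of "-1" u3 d] u1(2) u2(2) u3(2) d(2) unfolding OK_def SP_def tab_simps trip_neq
      by smt
  qed
qed

lemma C1: assumes G: "GOOD (0) T"
  and H1: "UPb T"
  and H2: "UPa ((\<lambda>t. (tb ((0)) t)) ` T)"
  shows "UPa T"
proof (rule ccontr)
  assume neg0: "\<not> ?thesis"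
  have neg: "\<not> UPa ((\<lambda>t. t) ` T)" using neg0 by simp
  from H1 obtain u1 where u1: "u1 \<in> T" "cb u1 = -1" "\<forall>s\<in>T. cb s = 1 \<longrightarrow> ch u1 < ch s"
    unfolding UPb_img UPb_def by blast
  from H2 obtain u2 where u2: "u2 \<in> T" "ca (tb ((0)) u2) = -1" "\<forall>s\<in>T. ca (tb ((0)) s) = 1 \<longrightarrow> ch (tb ((0)) u2) < ch (tb ((0)) s)"
    unfolding UPa_img UPa_def by blast
  from negUPa[OF GOOD_fin[OF G] neg] show False
  proof
    assume A: "\<forall>t\<in>T. ca t \<noteq> -1"
    have F_u1_u2: "OK (0) u1 \<and> OK (0) u2 \<and> (u1 \<noteq> u2 \<longrightarrow> SP (0) u1 u2 \<and> SP (0) u2 u1)" using GOOD2[OF G u1(1) u2(1)] by blast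
    have I: "cb u1 = 1 \<longrightarrow> ch u1 < ch u1" "cb u2 = 1 \<longrightarrow> ch u1 < ch u2" "ca (tb ((0)) u1) = 1 \<longrightarrow> ch (tb ((0)) u2) < ch (tb ((0)) u1)" "ca (tb ((0)) u2) = 1 \<longrightarrow> ch (tb ((0)) u2) < ch (tb ((0)) u2)" "ca u1 \<noteq> -1" "ca u2 \<noteq> -1"
      using u1 u2  A by auto
    show False using F_u1_u2 I u1(2) u2(2) unfolding OK_def SP_def tab_simps trip_neq
      by smt
  next
    assume "\<exists>d\<in>T. ca d = 1 \<and> (\<forall>t\<in>T. ca t = -1 \<longrightarrow> ch d \<le> ch t)"
    then obtain d where d: "d \<in> T" "ca d = 1" "\<forall>t\<in>T. ca t = -1 \<longrightarrow> ch d \<le> ch t" by blast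
    have F_u1_u2: "OK (0) u1 \<and> OK (0) u2 \<and> (u1 \<noteq> u2 \<longrightarrow> SP (0) u1 u2 \<and> SP (0) u2 u1)" using GOOD2[OF G u1(1) u2(1)] by blast
    have F_u1_d: "OK (0) u1 \<and> OK (0) d \<and> (u1 \<noteq> d \<longrightarrow> SP (0) u1 d \<and> SP (0) d u1)" using GOOD2[OF G u1(1) d(1)] by blast
    have F_u2_d: "OK (0) u2 \<and> OK (0) d \<and> (u2 \<noteq> d \<longrightarrow> SP (0) u2 d \<and> SP (0) d u2)" using GOOD2[OF G u2(1) d(1)] by blast
    have I: "cb u1 = 1 \<longrightarrow> ch u1 < ch u1" "cb u2 = 1 \<longrightarrow> ch u1 < ch u2" "cb d = 1 \<longrightarrow> ch u1 < ch d" "ca (tb ((0)) u1) = 1 \<longrightarrow> ch (tb ((0)) u2) < ch (tb ((0)) u1)" "ca (tb ((0)) u2) = 1 \<longrightarrow> ch (tb ((0)) u2) < ch (tb ((0)) u2)" "ca (tb ((0)) d) = 1 \<longrightarrow> ch (tb ((0)) u2) < ch (tb ((0)) d)" "ca u1 = -1 \<longrightarrow> ch d \<le> ch u1" "ca u2 = -1 \<longrightarrow> ch d \<le> ch u2" "ca d = -1 \<longrightarrow> ch d \<le> ch d"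
      using u1 u2  d by auto
    have P0: "u2 \<noteq> d \<longrightarrow> PC (0) u2 d" using GOOD2[OF G u2(1) d(1)] by blast
    have Z1: "u2 \<noteq> d \<and> u2 \<noteq> u1 \<and> d \<noteq> u1 \<longrightarrow> ZC (0) u2 d u1" using GOOD3[OF G u2(1) d(1) u1(1)] by blast
    show False using F_u1_u2 F_u1_d F_u2_d I P0 PC_m1_p1[of "0" u2 d] Z1 ZC_m1_p1[of "0" u2 d u1] u1(2) u2(2) d(2) unfolding OK_def SP_def tab_simps trip_neq
      by smt
  qed
qed

lemma C1p: assumes G: "GOOD (0) T"
  and H1: "UPb T"
  and H2: "UPa ((\<lambda>t. (tb ((0)) t)) ` T)"
  shows "UPb ((\<lambda>t. (ta ((0)) t)) ` T)"
proof (rule ccontr)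
  assume neg0: "\<not> ?thesis"
  have neg: "\<not> UPb ((\<lambda>t. (ta ((0)) t)) ` T)" using neg0 by simp
  from H1 obtain u1 where u1: "u1 \<in> T" "cb u1 = -1" "\<forall>s\<in>T. cb s = 1 \<longrightarrow> ch u1 < ch s"
    unfolding UPb_img UPb_def by blast
  from H2 obtain u2 where u2: "u2 \<in> T" "ca (tb ((0)) u2) = -1" "\<forall>s\<in>T. ca (tb ((0)) s) = 1 \<longrightarrow> ch (tb ((0)) u2) < ch (tb ((0)) s)"
    unfolding UPa_img UPa_def by blast
  from negUPb[OF GOOD_fin[OF G] neg] show False
  proof
    assume A: "\<forall>t\<in>T. cb (ta ((0)) t) \<noteq> -1"
    have F_u1_u2: "OK (0) u1 \<and> OK (0) u2 \<and> (u1 \<noteq> u2 \<longrightarrow> SP (0) u1 u2 \<and> SP (0) u2 u1)" using GOOD2[OF G u1(1) u2(1)] by blast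
    have I: "cb u1 = 1 \<longrightarrow> ch u1 < ch u1" "cb u2 = 1 \<longrightarrow> ch u1 < ch u2" "ca (tb ((0)) u1) = 1 \<longrightarrow> ch (tb ((0)) u2) < ch (tb ((0)) u1)" "ca (tb ((0)) u2) = 1 \<longrightarrow> ch (tb ((0)) u2) < ch (tb ((0)) u2)" "cb (ta ((0)) u1) \<noteq> -1" "cb (ta ((0)) u2) \<noteq> -1"
      using u1 u2  A by auto
    show False using F_u1_u2 I u1(2) u2(2) unfolding OK_def SP_def tab_simps trip_neq
      by smt
  next
    assume "\<exists>d\<in>T. cb (ta ((0)) d) = 1 \<and> (\<forall>t\<in>T. cb (ta ((0)) t) = -1 \<longrightarrow> ch (ta ((0)) d) \<le> ch (ta ((0)) t))"
    then obtain d where d: "d \<in> T" "cb (ta ((0)) d) = 1" "\<forall>t\<in>T. cb (ta ((0)) t) = -1 \<longrightarrow> ch (ta ((0)) d) \<le> ch (ta ((0)) t)" by blast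
    have F_u1_u2: "OK (0) u1 \<and> OK (0) u2 \<and> (u1 \<noteq> u2 \<longrightarrow> SP (0) u1 u2 \<and> SP (0) u2 u1)" using GOOD2[OF G u1(1) u2(1)] by blast
    have F_u1_d: "OK (0) u1 \<and> OK (0) d \<and> (u1 \<noteq> d \<longrightarrow> SP (0) u1 d \<and> SP (0) d u1)" using GOOD2[OF G u1(1) d(1)] by blast
    have F_u2_d: "OK (0) u2 \<and> OK (0) d \<and> (u2 \<noteq> d \<longrightarrow> SP (0) u2 d \<and> SP (0) d u2)" using GOOD2[OF G u2(1) d(1)] by blast
    have I: "cb u1 = 1 \<longrightarrow> ch u1 < ch u1" "cb u2 = 1 \<longrightarrow> ch u1 < ch u2" "cb d = 1 \<longrightarrow> ch u1 < ch d" "ca (tb ((0)) u1) = 1 \<longrightarrow> ch (tb ((0)) u2) < ch (tb ((0)) u1)" "ca (tb ((0)) u2) = 1 \<longrightarrow> ch (tb ((0)) u2) < ch (tb ((0)) u2)" "ca (tb ((0)) d) = 1 \<longrightarrow> ch (tb ((0)) u2) < ch (tb ((0)) d)" "cb (ta ((0)) u1) = -1 \<longrightarrow> ch (ta ((0)) d) \<le> ch (ta ((0)) u1)" "cb (ta ((0)) u2) = -1 \<longrightarrow> ch (ta ((0)) d) \<le> ch (ta ((0)) u2)" "cb (ta ((0)) d) = -1 \<longrightarrow> ch (ta ((0)) d) \<le> ch (ta ((0)) d)"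
      using u1 u2  d by auto
    have P0: "u1 \<noteq> d \<longrightarrow> PC (0) u1 d" using GOOD2[OF G u1(1) d(1)] by blast
    have Z1: "u1 \<noteq> d \<and> u1 \<noteq> u2 \<and> d \<noteq> u2 \<longrightarrow> ZC (0) u1 d u2" using GOOD3[OF G u1(1) d(1) u2(1)] by blast
    have P2: "u1 \<noteq> u2 \<longrightarrow> PC (0) u1 u2" using GOOD2[OF G u1(1) u2(1)] by blast
    show False using F_u1_u2 F_u1_d F_u2_d I P0 PC_p0_m1[of "0" u1 d] Z1 ZC_m1_m1[of "0" u1 d u2] P2 PC_p0_m1[of "0" u1 u2] u1(2) u2(2) d(2) unfolding OK_def SP_def tab_simps trip_neq
      by smt
  qed
qed


lemma L2abs: assumes G: "GOOD 0 T" and H: "UPb T" and neg: "\<not> UPb ((\<lambda>t. (ta 0 t)) ` T)"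
  shows "\<exists>t\<in>T. \<exists>s\<in>T. ca t = -1 \<and> cb t = -1 \<and> ca s = 1 \<and> cb s = 1 \<and> ch s = ch t + 2"
proof -
  from H obtain u where u: "u \<in> T" "cb u = -1" "\<forall>s\<in>T. cb s = 1 \<longrightarrow> ch u < ch s"
    unfolding UPb_def by blast
  have Fu: "OK 0 u" using GOOD2[OF G u(1) u(1)] by blast
  from negUPb[OF GOOD_fin[OF G] neg] show ?thesis
  proof
    assume A: "\<forall>t\<in>T. cb (ta 0 t) \<noteq> -1"
    have "cb (ta 0 u) \<noteq> -1" using A u by blast
    then have False using Fu u(2) unfolding OK_def tab_simps by smt
    then show ?thesis ..
  next
    assume "\<exists>d\<in>T. cb (ta 0 d) = 1 \<and> (\<forall>t\<in>T. cb (ta 0 t) = -1 \<longrightarrow> ch (ta 0 d) \<le> ch (ta 0 t))"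
    then obtain d where d: "d \<in> T" "cb (ta 0 d) = 1" "\<forall>t\<in>T. cb (ta 0 t) = -1 \<longrightarrow> ch (ta 0 d) \<le> ch (ta 0 t)" by blast
    have F: "OK 0 u \<and> OK 0 d \<and> (u \<noteq> d \<longrightarrow> SP 0 u d \<and> SP 0 d u)" using GOOD2[OF G u(1) d(1)] by blast
    have I: "cb d = 1 \<longrightarrow> ch u < ch d" "cb (ta 0 u) = -1 \<longrightarrow> ch (ta 0 d) \<le> ch (ta 0 u)"
      using u d by auto
    have P0: "u \<noteq> d \<longrightarrow> PC 0 u d" using GOOD2[OF G u(1) d(1)] by blast
    have "ca u = -1 \<and> cb u = -1 \<and> ca d = 1 \<and> cb d = 1 \<and> ch d = ch u + 2"
      using F I P0 PC_p0_m1[of "0" u d] u(2) d(2) unfolding OK_def SP_def tab_simps trip_neq by smt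
    then show ?thesis using u(1) d(1) by blast
  qed
qed



context orbit begin

definition tr :: "nat \<Rightarrow> nat \<Rightarrow> (nat \<Rightarrow> int) \<Rightarrow> int \<times> int \<times> int" where
  "tr i j b = (ipv b (alpha i), ipv b (alpha j), ht n b)"

lemma tr_simps[simp]: "ca (tr i j b) = ipv b (alpha i)" "cb (tr i j b) = ipv b (alpha j)" "ch (tr i j b) = ht n b"
  by (simp_all add: tr_def)

lemma tr_ta: assumes "b \<in> P" "i \<in> N" "j \<in> N" shows "tr i j (fi i b) = ta (cartan adj i j) (tr i j b)"
proof -
  have cii: "cartan adj i i = 2" by (simp add: cartan_def)
  show ?thesis
    using fi_alpha_coord[OF assms(1,2,2)] fi_alpha_coord[OF assms(1,2,3)] fi_ht[OF assms(1,2)] cii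
    by (simp add: tr_def ta_def)
qed

lemma tr_tb: assumes "b \<in> P" "i \<in> N" "j \<in> N" shows "tr i j (fi j b) = tb (cartan adj i j) (tr i j b)"
proof -
  have cjj: "cartan adj j j = 2" by (simp add: cartan_def)
  show ?thesis
    using fi_alpha_coord[OF assms(1,3,2)] fi_alpha_coord[OF assms(1,3,3)] fi_ht[OF assms(1,3)] cjj cartan_sym[of i j]
    by (simp add: tr_def tb_def)
qed

lemma tr_img_a: assumes "X \<in> BB" "i \<in> N" "j \<in> N"
  shows "tr i j ` r i X = (\<lambda>t. ta (cartan adj i j) t) ` tr i j ` X"
  unfolding r_img[OF assms(1,2)] image_image using tr_ta[OF _ assms(2,3)] orbit_P[OF assms(1)]
  by (intro image_cong) auto

lemma tr_img_b: assumes "X \<in> BB" "i \<in> N" "j \<in> N"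
  shows "tr i j ` r j X = (\<lambda>t. tb (cartan adj i j) t) ` tr i j ` X"
  unfolding r_img[OF assms(1,3)] image_image using tr_tb[OF _ assms(2,3)] orbit_P[OF assms(1)]
  by (intro image_cong) auto

lemma UP_tr_a: "UP i X \<longleftrightarrow> UPa (tr i j ` X)" by (simp add: UP_def UPa_def)
lemma UP_tr_b: "UP j X \<longleftrightarrow> UPb (tr i j ` X)" by (simp add: UP_def UPb_def)

end


context orbit begin

lemma single_vec: assumes "X \<in> BB" "b \<in> X" "i \<in> N" "j \<in> N"
  shows "ipv (\<lambda>k. b k + x * alpha i k + y * alpha j k) (\<lambda>k. b k + x * alpha i k + y * alpha j k)
     = 2 + 2*x*x + 2*y*y + 2*x*y*cartan adj i j + 2*x*ipv b (alpha i) + 2*y*ipv b (alpha j)"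
    "supp_ok (\<lambda>k. b k + x * alpha i k + y * alpha j k)"
proof -
  have bR: "b \<in> R" using assms orbit_P PR by blast
  have s: "ipv (alpha i) b = ipv b (alpha i)" "ipv (alpha j) b = ipv b (alpha j)" by (rule ip_sym)+
  have a: "ipv (alpha i) (alpha j) = cartan adj i j" "ipv (alpha j) (alpha i) = cartan adj i j"
    "ipv (alpha i) (alpha i) = 2" "ipv (alpha j) (alpha j) = 2"
    using ip_alpha_alpha assms(3,4) cartan_sym ip_alpha_self by auto
  show "ipv (\<lambda>k. b k + x * alpha i k + y * alpha j k) (\<lambda>k. b k + x * alpha i k + y * alpha j k)
     = 2 + 2*x*x + 2*y*y + 2*x*y*cartan adj i j + 2*x*ipv b (alpha i) + 2*y*ipv b (alpha j)"
    using roots_norm[OF bR] by (simp add: ip_lin s a) (simp add: algebra_simps)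
  show "supp_ok (\<lambda>k. b k + x * alpha i k + y * alpha j k)"
    using bR assms(3,4) by (intro supp_add supp_smult roots_supp supp_alpha)
qed

lemma sum_ij: assumes "X \<in> BB" "b \<in> X" "i \<in> N" "j \<in> N" "adj i j"
  "ipv b (alpha i) = 1" "ipv b (alpha j) = 1"
  shows "b = (\<lambda>k. alpha i k + alpha j k)"
proof -
  have c: "cartan adj i j = -1" using assms(5) adj_nodes by (simp add: cartan_def)
  have "ipv (\<lambda>k. b k + (-1) * alpha i k + (-1) * alpha j k) (\<lambda>k. b k + (-1) * alpha i k + (-1) * alpha j k) = 0"
    using single_vec(1)[OF assms(1-4), of "-1" "-1"] c assms(6,7) by simp
  from ip_zero_imp[OF single_vec(2)[OF assms(1-4)] this]
  have e: "(\<lambda>k. b k + (-1) * alpha i k + (-1) * alpha j k) = (\<lambda>k. 0)" .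
  show ?thesis
  proof (rule ext)
    fix k show "b k = alpha i k + alpha j k" using fun_cong[OF e, of k] by simp
  qed
qed

lemma not_mm: assumes "X \<in> BB" "b \<in> X" "i \<in> N" "j \<in> N" "adj i j"
  "ipv b (alpha i) = -1" "ipv b (alpha j) = -1" shows False
proof -
  have c: "cartan adj i j = -1" using assms(5) adj_nodes by (simp add: cartan_def)
  have ij: "i \<noteq> j" using assms(5) adj_nodes by blast
  have "ipv (\<lambda>k. b k + 1 * alpha i k + 1 * alpha j k) (\<lambda>k. b k + 1 * alpha i k + 1 * alpha j k) = 0"
    using single_vec(1)[OF assms(1-4), of 1 1] c assms(6,7) by simp
  from ip_zero_imp[OF single_vec(2)[OF assms(1-4)] this]
  have e: "(\<lambda>k. b k + 1 * alpha i k + 1 * alpha j k) = (\<lambda>k. 0)" .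
  have "b i + 1 * alpha i i + 1 * alpha j i = 0" using fun_cong[OF e, of i] by simp
  then have "b i = -1" using ij by (simp add: alpha_def)
  moreover have "b \<in> P" using assms(1,2) orbit_P by blast
  then have "b i \<ge> 0" by (simp add: pos_roots_iff)
  ultimately show False by simp
qed

lemma OK_tr: assumes "X \<in> BB" "b \<in> X" "i \<in> N" "j \<in> N" "i \<noteq> j"
  shows "OK (cartan adj i j) (tr i j b)"
proof -
  have bP: "b \<in> P" using assms orbit_P by blast
  have ra: "ipv b (alpha i) \<in> {-1,0,1,2}" "ipv b (alpha i) = 2 \<longleftrightarrow> b = alpha i" using c_range[OF assms(1,2,3)] by auto
  have rb: "ipv b (alpha j) \<in> {-1,0,1,2}" "ipv b (alpha j) = 2 \<longleftrightarrow> b = alpha j" using c_range[OF assms(1,2,4)] by auto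
  have h: "ht n b \<ge> 1" using ht_pos_P[OF bP] .
  have A: "ipv b (alpha i) = 2 \<longrightarrow> ipv b (alpha j) = cartan adj i j \<and> ht n b = 1"
    using ra(2) ip_alpha_alpha[OF assms(3,4)] ht_alpha[OF assms(3)] by auto
  have B: "ipv b (alpha j) = 2 \<longrightarrow> ipv b (alpha i) = cartan adj i j \<and> ht n b = 1"
    using rb(2) ip_alpha_alpha[OF assms(4,3)] ht_alpha[OF assms(4)] cartan_sym by auto
  have C: "cartan adj i j = -1 \<longrightarrow> \<not> (ipv b (alpha i) = -1 \<and> ipv b (alpha j) = -1) \<and>
      (ipv b (alpha i) = 1 \<and> ipv b (alpha j) = 1 \<longrightarrow> ht n b = 2)"
  proof
    assume c: "cartan adj i j = -1"
    then have adj: "adj i j" using assms(5) by (auto simp: cartan_def split: if_splits)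
    have "\<not> (ipv b (alpha i) = -1 \<and> ipv b (alpha j) = -1)" using not_mm[OF assms(1-4) adj] by blast
    moreover have "ipv b (alpha i) = 1 \<and> ipv b (alpha j) = 1 \<longrightarrow> ht n b = 2"
    proof
      assume "ipv b (alpha i) = 1 \<and> ipv b (alpha j) = 1"
      then have "b = (\<lambda>k. alpha i k + alpha j k)" using sum_ij[OF assms(1-4) adj] by blast
      then show "ht n b = 2" using ht_lin(1) ht_alpha assms(3,4) by simp
    qed
    ultimately show "\<not> (ipv b (alpha i) = -1 \<and> ipv b (alpha j) = -1) \<and>
      (ipv b (alpha i) = 1 \<and> ipv b (alpha j) = 1 \<longrightarrow> ht n b = 2)" by blast
  qed
  show ?thesis unfolding OK_def tr_simps using ra(1) rb(1) h A B C by auto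
qed

lemma PC_tr: assumes "X \<in> BB" "b \<in> X" "g \<in> X" "b \<noteq> g" "i \<in> N" "j \<in> N"
  shows "PC (cartan adj i j) (tr i j b) (tr i j g)"
  unfolding PC_def PCf_def tr_simps
proof (intro allI conjI impI)
  fix x y
  let ?N = "4 + 2*x*x + 2*y*y + 2*x*y*cartan adj i j + 2*x*(ipv g (alpha i) - ipv b (alpha i))
       + 2*y*(ipv g (alpha j) - ipv b (alpha j))"
  have eqN: "ipv (\<lambda>k. g k - b k + x * alpha i k + y * alpha j k) (\<lambda>k. g k - b k + x * alpha i k + y * alpha j k) = ?N"
    using pair_vec_norm[OF assms] .
  have sv: "supp_ok (\<lambda>k. g k - b k + x * alpha i k + y * alpha j k)" by (rule pair_vec_supp[OF assms(1,2,3,5,6)])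
  show "0 \<le> ?N" using ip_nonneg[OF sv] eqN by simp
  show "?N = 2 \<Longrightarrow> ht n g - ht n b + x + y \<noteq> 0" using pair_norm[OF assms] by blast
  assume N0: "?N = 0"
  have e: "g = (\<lambda>k. b k - x * alpha i k - y * alpha j k)" using pair_zero[OF assms N0] .
  have s: "ipv (alpha i) b = ipv b (alpha i)" "ipv (alpha j) b = ipv b (alpha j)" by (rule ip_sym)+
  have a: "ipv (alpha i) (alpha j) = cartan adj i j" "ipv (alpha j) (alpha i) = cartan adj i j"
    "ipv (alpha i) (alpha i) = 2" "ipv (alpha j) (alpha j) = 2"
    using ip_alpha_alpha assms(5,6) cartan_sym ip_alpha_self by auto
  show "ipv g (alpha i) = ipv b (alpha i) - 2 * x - y * cartan adj i j"
    by (subst e) (simp add: ip_lin a algebra_simps)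
  show "ipv g (alpha j) = ipv b (alpha j) - x * cartan adj i j - 2 * y"
    by (subst e) (simp add: ip_lin a algebra_simps)
  show "ht n g = ht n b - (x + y)"
    by (subst e) (simp add: ht_lin ht_alpha assms(5,6))
  have o: "ipv b g = 0" using orbit_orth[OF assms(1-4)] .
  have bR: "b \<in> R" using assms orbit_P PR by blast
  have "ipv b g = 2 - x * ipv b (alpha i) - y * ipv b (alpha j)"
    using roots_norm[OF bR] by (subst e) (simp add: ip_lin)
  then show "x * ipv b (alpha i) + y * ipv b (alpha j) = 2" using o by simp
qed

lemma ZC_tr: assumes "X \<in> BB" "b \<in> X" "g \<in> X" "u \<in> X" "b \<noteq> g" "b \<noteq> u" "g \<noteq> u" "i \<in> N" "j \<in> N"
  shows "ZC (cartan adj i j) (tr i j b) (tr i j g) (tr i j u)"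
  unfolding ZC_def ZCf_def tr_simps
proof (intro allI impI)
  fix x y
  assume N0: "4 + 2*x*x + 2*y*y + 2*x*y*cartan adj i j + 2*x*(ipv g (alpha i) - ipv b (alpha i))
       + 2*y*(ipv g (alpha j) - ipv b (alpha j)) = 0"
  have e: "g = (\<lambda>k. b k - x * alpha i k - y * alpha j k)" using pair_zero[OF assms(1,2,3,5,8,9) N0] .
  have o1: "ipv u g = 0" using orbit_orth[OF assms(1,4,3)] assms(7) by auto
  have o2: "ipv u b = 0" using orbit_orth[OF assms(1,4,2)] assms(6) by auto
  have "ipv u g = ipv u b - x * ipv u (alpha i) - y * ipv u (alpha j)"
    by (subst e) (simp add: ip_lin)
  then show "x * ipv u (alpha i) + y * ipv u (alpha j) = 0" using o1 o2 by simp
qed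

lemma SP_tr: assumes "X \<in> BB" "b \<in> X" "g \<in> X" "b \<noteq> g" "i \<in> N" "j \<in> N" "i \<noteq> j"
  shows "SP (cartan adj i j) (tr i j b) (tr i j g)"
proof -
  have o: "ipv g b = 0" using orbit_orth[OF assms(1,3,2)] assms(4) by auto
  have A: "ipv b (alpha i) = 2 \<longrightarrow> ipv g (alpha i) = 0"
    using c_range(2)[OF assms(1,2,5)] o by auto
  have B: "ipv b (alpha j) = 2 \<longrightarrow> ipv g (alpha j) = 0"
    using c_range(2)[OF assms(1,2,6)] o by auto
  have C: "cartan adj i j = -1 \<and> ipv b (alpha i) = 1 \<and> ipv b (alpha j) = 1 \<longrightarrow> ipv g (alpha i) + ipv g (alpha j) = 0"
  proof
    assume h: "cartan adj i j = -1 \<and> ipv b (alpha i) = 1 \<and> ipv b (alpha j) = 1"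
    then have adj: "adj i j" using assms(7) by (auto simp: cartan_def split: if_splits)
    have "b = (\<lambda>k. alpha i k + alpha j k)" using sum_ij[OF assms(1,2,5,6) adj] h by blast
    then have "ipv g b = ipv g (alpha i) + ipv g (alpha j)" by (simp add: ip_lin)
    then show "ipv g (alpha i) + ipv g (alpha j) = 0" using o by simp
  qed
  show ?thesis unfolding SP_def tr_simps using A B C by blast
qed

lemma GOOD_tr: assumes "X \<in> BB" "i \<in> N" "j \<in> N" "i \<noteq> j"
  shows "GOOD (cartan adj i j) (tr i j ` X)"
  unfolding GOOD_def
proof (intro conjI ballI impI)
  show "finite (tr i j ` X)" using in_orbit(2)[OF assms(1)] by simp
  fix t assume "t \<in> tr i j ` X"
  then obtain b where b: "b \<in> X" "t = tr i j b" by blast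
  show "OK (cartan adj i j) t" using OK_tr[OF assms(1) b(1) assms(2-4)] b(2) by simp
  fix s assume "s \<in> tr i j ` X"
  then obtain g where g: "g \<in> X" "s = tr i j g" by blast
  {
    assume "t \<noteq> s"
    then have bg: "b \<noteq> g" using b g by auto
    show "PC (cartan adj i j) t s" using PC_tr[OF assms(1) b(1) g(1) bg assms(2,3)] b g by simp
    show "SP (cartan adj i j) t s" using SP_tr[OF assms(1) b(1) g(1) bg assms(2-4)] b g by simp
  }
  fix u assume "u \<in> tr i j ` X"
  then obtain w where w: "w \<in> X" "u = tr i j w" by blast
  assume "t \<noteq> s \<and> t \<noteq> u \<and> s \<noteq> u"
  then have d: "b \<noteq> g" "b \<noteq> w" "g \<noteq> w" using b g w by auto
  show "ZC (cartan adj i j) t s u" using ZC_tr[OF assms(1) b(1) g(1) w(1) d assms(2,3)] b g w by simp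
qed

end


context orbit begin

lemma cart_adj: "adj i j \<Longrightarrow> cartan adj i j = -1" using adj_nodes by (simp add: cartan_def)
lemma cart_nadj: "\<not> adj i j \<Longrightarrow> i \<noteq> j \<Longrightarrow> cartan adj i j = 0" by (simp add: cartan_def)

lemma img_comp: "(\<lambda>t. f t) ` (\<lambda>t. g t) ` T = (\<lambda>t. f (g t)) ` T" by (simp add: image_image)

lemma conc_3a: assumes "B \<in> BB" "i \<in> N" "j \<in> N" "adj i j" "UP i B" "UP j B" shows "UP j (r i B)"
proof -
  have ij: "i \<noteq> j" using adj_nodes assms(4) by blast
  have c: "cartan adj i j = -1" using cart_adj[OF assms(4)] .
  have G: "GOOD (-1) (tr i j ` B)" using GOOD_tr[OF assms(1-3) ij] c by simp
  have "UPb ((\<lambda>t. ta (-1) t) ` tr i j ` B)"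
    using A3a[OF G] assms(5,6) UP_tr_a[of i _ j] UP_tr_b[of j _ i] by blast
  then show ?thesis using tr_img_a[OF assms(1-3)] c UP_tr_b[of j _ i] by simp
qed

lemma conc_3b: assumes "B \<in> BB" "i \<in> N" "j \<in> N" "adj i j" "UP i B" "UP j B" shows "UP i (r j (r i B))"
proof -
  have ij: "i \<noteq> j" using adj_nodes assms(4) by blast
  have c: "cartan adj i j = -1" using cart_adj[OF assms(4)] .
  have G: "GOOD (-1) (tr i j ` B)" using GOOD_tr[OF assms(1-3) ij] c by simp
  have h3: "UP j (r i B)" using conc_3a[OF assms] .
  have H3: "UPb ((\<lambda>t. ta (-1) t) ` tr i j ` B)" using h3 tr_img_a[OF assms(1-3)] c UP_tr_b[of j _ i] by simp
  have "UPa ((\<lambda>t. tb (-1) (ta (-1) t)) ` tr i j ` B)"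
    using A3b[OF G _ _ H3] assms(5,6) UP_tr_a[of i _ j] UP_tr_b[of j _ i] by blast
  moreover have "tr i j ` r j (r i B) = (\<lambda>t. tb (-1) (ta (-1) t)) ` tr i j ` B"
    using tr_img_b[OF orbit_setact[OF assms(1,2)] assms(2,3)] tr_img_a[OF assms(1-3)] c by (simp add: image_image)
  ultimately show ?thesis using UP_tr_a[of i _ j] by simp
qed

lemma conc_4a: assumes "Z \<in> BB" "i \<in> N" "j \<in> N" "adj i j" "UP i Z" "UP j (r i Z)" "UP i (r j (r i Z))"
  shows "UP j Z"
proof -
  have ij: "i \<noteq> j" using adj_nodes assms(4) by blast
  have c: "cartan adj i j = -1" using cart_adj[OF assms(4)] .
  have G: "GOOD (-1) (tr i j ` Z)" using GOOD_tr[OF assms(1-3) ij] c by simp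
  have H2: "UPb ((\<lambda>t. ta (-1) t) ` tr i j ` Z)" using assms(6) tr_img_a[OF assms(1-3)] c UP_tr_b[of j _ i] by simp
  have e: "tr i j ` r j (r i Z) = (\<lambda>t. tb (-1) (ta (-1) t)) ` tr i j ` Z"
    using tr_img_b[OF orbit_setact[OF assms(1,2)] assms(2,3)] tr_img_a[OF assms(1-3)] c by (simp add: image_image)
  have H3: "UPa ((\<lambda>t. tb (-1) (ta (-1) t)) ` tr i j ` Z)" using assms(7) e UP_tr_a[of i _ j] by simp
  have "UPb (tr i j ` Z)" using A4a[OF G _ H2 H3] assms(5) UP_tr_a[of i _ j] by blast
  then show ?thesis using UP_tr_b[of j _ i] by simp
qed

lemma conc_C1: assumes "Y \<in> BB" "i \<in> N" "j \<in> N" "\<not> adj i j" "i \<noteq> j" "UP j Y" "UP i (r j Y)"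
  shows "UP i Y" "UP j (r i Y)"
proof -
  have c: "cartan adj i j = 0" using cart_nadj assms(4,5) by blast
  have G: "GOOD 0 (tr i j ` Y)" using GOOD_tr[OF assms(1-3,5)] c by simp
  have H2: "UPa ((\<lambda>t. tb 0 t) ` tr i j ` Y)" using assms(7) tr_img_b[OF assms(1-3)] c UP_tr_a[of i _ j] by simp
  have H1: "UPb (tr i j ` Y)" using assms(6) UP_tr_b[of j _ i] by simp
  show "UP i Y" using C1[OF G H1 H2] UP_tr_a[of i _ j] by simp
  have "UPb ((\<lambda>t. ta 0 t) ` tr i j ` Y)" using C1p[OF G H1 H2] .
  then show "UP j (r i Y)" using tr_img_a[OF assms(1-3)] c UP_tr_b[of j _ i] by simp
qed

end

locale adm_orbit = orbit +
  assumes adm: "admissible n adj BB"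
begin

lemma conc_L2: assumes "B \<in> BB" "i \<in> N" "j \<in> N" "\<not> adj i j" "i \<noteq> j" "UP j B" "r i B \<noteq> r j B"
  shows "UP j (r i B)"
proof (rule ccontr)
  assume neg: "\<not> UP j (r i B)"
  have c: "cartan adj i j = 0" using cart_nadj assms(4,5) by blast
  have G: "GOOD 0 (tr i j ` B)" using GOOD_tr[OF assms(1-3,5)] c by simp
  have H: "UPb (tr i j ` B)" using assms(6) UP_tr_b[of j _ i] by simp
  have N: "\<not> UPb ((\<lambda>t. ta 0 t) ` tr i j ` B)" using neg tr_img_a[OF assms(1-3)] c UP_tr_b[of j _ i] by simp
  obtain t s where ts: "t \<in> tr i j ` B" "s \<in> tr i j ` B" "ca t = -1" "cb t = -1" "ca s = 1" "cb s = 1" "ch s = ch t + 2"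
    using L2abs[OF G H N] by blast
  then obtain b0 g where bg: "b0 \<in> B" "g \<in> B" "ipv b0 (alpha i) = -1" "ipv b0 (alpha j) = -1"
    "ipv g (alpha i) = 1" "ipv g (alpha j) = 1" by auto
  have ne: "b0 \<noteq> g" using bg by auto
  have "4 + 2*(-1)*(-1) + 2*(-1)*(-1) + 2*(-1)*(-1)*cartan adj i j + 2*(-1)*(ipv g (alpha i) - ipv b0 (alpha i))
       + 2*(-1)*(ipv g (alpha j) - ipv b0 (alpha j)) = (0::int)" using bg c by simp
  from pair_zero[OF assms(1) bg(1,2) ne assms(2,3) this]
  have ge: "g = (\<lambda>k. b0 k + alpha i k + alpha j k)" by (simp add: fun_eq_iff)
  have f1: "fi i b0 = (\<lambda>k. b0 k + alpha i k)"
    using fi_moved_ht(2)[OF assms(1) bg(1) assms(2)] bg(3) by (simp add: rf_def' fun_eq_iff)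
  have f2a: "fi i g = (\<lambda>k. g k - alpha i k)"
    using fi_moved_ht(2)[OF assms(1) bg(2) assms(2)] bg(5) by (simp add: rf_def')
  have f2: "fi i g = (\<lambda>k. b0 k + alpha j k)"
    using f2a by (simp add: ge fun_eq_iff)
  have X': "r i B \<in> BB" using orbit_setact[OF assms(1,2)] .
  have g1: "fi i b0 \<in> r i B" using r_img[OF assms(1,2)] bg(1) by blast
  have g2: "(\<lambda>k. fi i b0 k - alpha i k + alpha j k) \<in> r i B"
  proof -
    have "(\<lambda>k. fi i b0 k - alpha i k + alpha j k) = fi i g" using f1 f2 by (simp add: fun_eq_iff)
    then show ?thesis using r_img[OF assms(1,2)] bg(2) by simp
  qed
  have gR: "fi i b0 \<in> R" using g1 X' orbit_P PR by blast
  have "setact n adj i (r i B) = setact n adj j (r i B)"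
    using adm X' assms(2,3,4) gR g1 g2 unfolding admissible_def by blast
  then have "B = r j (r i B)" using rr[OF assms(1,2)] by simp
  then have "r j B = r j (r j (r i B))" by simp
  also have "\<dots> = r i B" using rr[OF X' assms(3)] .
  finally show False using assms(7) by simp
qed

lemma main:
  assumes B: "B \<in> BB" and i: "i \<in> N" and j: "j \<in> N"
  shows
    "(\<not> adj i j \<and> lt (r i (r j B)) (r i B) \<and> lt (r i B) B
        \<longrightarrow> lt (r i (r j B)) (r j B) \<and> lt (r j B) B)
   \<and> (\<not> adj i j \<and> lt B (r i B) \<and> lt B (r j B) \<and> r i B \<noteq> r j B
        \<longrightarrow> lt (r i B) (r i (r j B)) \<and> lt (r j B) (r i (r j B)))
   \<and> (adj i j \<and> lt B (r i B) \<and> lt B (r j B)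
        \<longrightarrow> lt (r i B) (r j (r i B)) \<and> lt (r j (r i B)) (r i (r j (r i B)))
          \<and> lt (r j B) (r i (r j B)) \<and> lt (r i (r j B)) (r j (r i (r j B))))
   \<and> (adj i j \<and> lt (r j (r i (r j B))) (r j (r i B)) \<and> lt (r j (r i B)) (r i B) \<and> lt (r i B) B
        \<longrightarrow> lt (r j (r i (r j B))) (r i (r j B)) \<and> lt (r i (r j B)) (r j B) \<and> lt (r j B) B)
   \<and> (alpha i \<notin> perp n adj B \<union> B \<longrightarrow> lt (r i B) B \<or> lt B (r i B))"
proof -
  have riB: "r i B \<in> BB" and rjB: "r j B \<in> BB" using orbit_setact B i j by auto
  have C1: "\<not> adj i j \<and> lt (r i (r j B)) (r i B) \<and> lt (r i B) B \<longrightarrow> lt (r i (r j B)) (r j B) \<and> lt (r j B) B"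
  proof
    assume h: "\<not> adj i j \<and> lt (r i (r j B)) (r i B) \<and> lt (r i B) B"
    show "lt (r i (r j B)) (r j B) \<and> lt (r j B) B"
    proof (cases "i = j")
      case True
      have "lt B (r i B)" using h True rr[OF B i] by simp
      then show ?thesis using h lt_trans lt_irrefl by metis
    next
      case False
      define Y where "Y = r i (r j B)"
      have Y: "Y \<in> BB" unfolding Y_def using orbit_setact rjB i by blast
      have Yc: "Y = r j (r i B)" unfolding Y_def using rcomm[OF B i j _ False] h by blast
      have rjY: "r j Y = r i B" unfolding Yc using rr[OF riB j] .
      have riY: "r i Y = r j B" unfolding Y_def using rr[OF rjB i] .
      have u1: "UP j Y" using h lt_iff_UP[OF Y j] rjY Y_def by simp
      have "UP i (r i B)" using h lt_iff_UP[OF riB i] rr[OF B i] by simp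
      then have u2: "UP i (r j Y)" using rjY by simp
      have c1: "UP i Y" "UP j (r i Y)" using conc_C1[OF Y i j _ False u1 u2] h by auto
      have "lt Y (r i Y)" using c1(1) lt_iff_UP[OF Y i] by simp
      moreover have "lt (r j B) (r j (r j B))" using c1(2) riY lt_iff_UP[OF rjB j] by simp
      ultimately show ?thesis using riY rr[OF B j] Y_def by simp
    qed
  qed
  have C2: "\<not> adj i j \<and> lt B (r i B) \<and> lt B (r j B) \<and> r i B \<noteq> r j B \<longrightarrow> lt (r i B) (r i (r j B)) \<and> lt (r j B) (r i (r j B))"
  proof
    assume h: "\<not> adj i j \<and> lt B (r i B) \<and> lt B (r j B) \<and> r i B \<noteq> r j B"
    then have ij: "i \<noteq> j" by auto
    have ui: "UP i B" and uj: "UP j B" using h lt_iff_UP[OF B i] lt_iff_UP[OF B j] by auto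
    have nadj: "\<not> adj j i" using h adj_sym by blast
    have a1: "UP j (r i B)" using conc_L2[OF B i j _ ij uj] h by blast
    have a2: "UP i (r j B)" using conc_L2[OF B j i nadj _ ui] h ij by metis
    have e: "r i (r j B) = r j (r i B)" using rcomm[OF B i j _ ij] h by blast
    show "lt (r i B) (r i (r j B)) \<and> lt (r j B) (r i (r j B))"
      using a1 a2 lt_iff_UP[OF riB j] lt_iff_UP[OF rjB i] e by simp
  qed
  have C3: "adj i j \<and> lt B (r i B) \<and> lt B (r j B) \<longrightarrow> lt (r i B) (r j (r i B)) \<and> lt (r j (r i B)) (r i (r j (r i B)))
          \<and> lt (r j B) (r i (r j B)) \<and> lt (r i (r j B)) (r j (r i (r j B)))"
  proof
    assume h: "adj i j \<and> lt B (r i B) \<and> lt B (r j B)"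
    have ui: "UP i B" and uj: "UP j B" using h lt_iff_UP[OF B i] lt_iff_UP[OF B j] by auto
    have adj': "adj j i" using h adj_sym by blast
    have "UP j (r i B)" using conc_3a[OF B i j _ ui uj] h by blast
    moreover have "UP i (r j (r i B))" using conc_3b[OF B i j _ ui uj] h by blast
    moreover have "UP i (r j B)" using conc_3a[OF B j i adj' uj ui] .
    moreover have "UP j (r i (r j B))" using conc_3b[OF B j i adj' uj ui] .
    ultimately show "lt (r i B) (r j (r i B)) \<and> lt (r j (r i B)) (r i (r j (r i B)))
          \<and> lt (r j B) (r i (r j B)) \<and> lt (r i (r j B)) (r j (r i (r j B)))"
      using lt_iff_UP orbit_setact B i j riB rjB by auto
  qed
  have C4: "adj i j \<and> lt (r j (r i (r j B))) (r j (r i B)) \<and> lt (r j (r i B)) (r i B) \<and> lt (r i B) B \<longrightarrow> lt (r j (r i (r j B))) (r i (r j B)) \<and> lt (r i (r j B)) (r j B) \<and> lt (r j B) B"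
  proof
    assume h: "adj i j \<and> lt (r j (r i (r j B))) (r j (r i B)) \<and> lt (r j (r i B)) (r i B) \<and> lt (r i B) B"
    have adj': "adj j i" using h adj_sym by blast
    define Z where "Z = r j (r i (r j B))"
    have rirjB: "r i (r j B) \<in> BB" using orbit_setact rjB i by blast
    have rjriB: "r j (r i B) \<in> BB" using orbit_setact riB j by blast
    have Z: "Z \<in> BB" unfolding Z_def using orbit_setact rirjB j by blast
    have Zb: "Z = r i (r j (r i B))" unfolding Z_def using rbraid[OF B i j] h by simp
    have riZ: "r i Z = r j (r i B)" unfolding Zb using rr[OF rjriB i] .
    have rjZ: "r j Z = r i (r j B)" unfolding Z_def using rr[OF rirjB j] .
    have rjriZ: "r j (r i Z) = r i B" unfolding riZ using rr[OF riB j] .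
    have rirjZ: "r i (r j Z) = r j B" unfolding rjZ using rr[OF rjB i] .
    have riZB: "r i Z \<in> BB" using riZ rjriB by simp
    have rjZB: "r j Z \<in> BB" using rjZ rirjB by simp
    have h1: "UP i Z" using h lt_iff_UP[OF Z i] riZ Z_def by simp
    have h2: "UP j (r i Z)" using h lt_iff_UP[OF riZB j] rjriZ riZ by simp
    have "UP i (r i B)" using h lt_iff_UP[OF riB i] rr[OF B i] by simp
    then have h3: "UP i (r j (r i Z))" using rjriZ by simp
    have uj: "UP j Z" using conc_4a[OF Z i j _ h1 h2 h3] h by blast
    have g2: "UP i (r j Z)" using conc_3a[OF Z j i adj' uj h1] .
    have g3: "UP j (r i (r j Z))" using conc_3b[OF Z j i adj' uj h1] .
    have "lt Z (r j Z)" using uj lt_iff_UP[OF Z j] by simp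
    moreover have "lt (r j Z) (r i (r j Z))" using g2 lt_iff_UP[OF rjZB i] by simp
    moreover have "lt (r j B) (r j (r j B))" using g3 rirjZ lt_iff_UP[OF rjB j] by simp
    ultimately show "lt (r j (r i (r j B))) (r i (r j B)) \<and> lt (r i (r j B)) (r j B) \<and> lt (r j B) B"
      using Z_def rjZ rirjZ rr[OF B j] by simp
  qed
  have C5: "alpha i \<notin> perp n adj B \<union> B \<longrightarrow> lt (r i B) B \<or> lt B (r i B)"
  proof
    assume h: "alpha i \<notin> perp n adj B \<union> B"
    then obtain b where b: "b \<in> B" "ipv (alpha i) b \<noteq> 0"
      using alpha_root[OF i] unfolding perp_def by blast
    have bne: "b \<noteq> alpha i" using h b(1) by blast
    have "ipv b (alpha i) \<in> {-1,0,1,2}" "ipv b (alpha i) = 2 \<longleftrightarrow> b = alpha i" using c_range[OF B b(1) i] by auto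
    moreover have "ipv b (alpha i) \<noteq> 0" using b(2) ip_sym by metis
    ultimately have "ipv b (alpha i) \<in> {-1,1}" using bne by auto
    then have "Dk i B \<noteq> {}" using b(1) unfolding Dk_def by blast
    then show "lt (r i B) B \<or> lt B (r i B)" using trich[OF B i] by blast
  qed
  show ?thesis using C1 C2 C3 C4 C5 by blast
qed

end


theorem lemma3p4:
  fixes n :: nat and adj :: "nat \<Rightarrow> nat \<Rightarrow> bool"
    and \<B> :: "(nat \<Rightarrow> int) set set" and B :: "(nat \<Rightarrow> int) set" and i j :: nat
  assumes M: "spherical_simply_laced n adj"
    and orb: "is_orbit n adj \<B>"
    and adm: "admissible n adj \<B>"
    and B: "B \<in> \<B>"
    and i: "i \<in> nodes n" and j: "j \<in> nodes n"
  defines "lt \<equiv> mless n adj \<B>" and "r \<equiv> setact n adj"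
  shows
    "(\<not> adj i j \<and> lt (r i (r j B)) (r i B) \<and> lt (r i B) B
        \<longrightarrow> lt (r i (r j B)) (r j B) \<and> lt (r j B) B)
   \<and> (\<not> adj i j \<and> lt B (r i B) \<and> lt B (r j B) \<and> r i B \<noteq> r j B
        \<longrightarrow> lt (r i B) (r i (r j B)) \<and> lt (r j B) (r i (r j B)))
   \<and> (adj i j \<and> lt B (r i B) \<and> lt B (r j B)
        \<longrightarrow> lt (r i B) (r j (r i B)) \<and> lt (r j (r i B)) (r i (r j (r i B)))
          \<and> lt (r j B) (r i (r j B)) \<and> lt (r i (r j B)) (r j (r i (r j B))))
   \<and> (adj i j \<and> lt (r j (r i (r j B))) (r j (r i B)) \<and> lt (r j (r i B)) (r i B) \<and> lt (r i B) B
        \<longrightarrow> lt (r j (r i (r j B))) (r i (r j B)) \<and> lt (r i (r j B)) (r j B) \<and> lt (r j B) B)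
   \<and> (alpha i \<notin> perp n adj B \<union> B \<longrightarrow> lt (r i B) B \<or> lt B (r i B))"
proof -
  interpret adm_orbit n adj \<B>
    by (unfold_locales) (rule M, rule orb, rule adm)
  show ?thesis unfolding lt_def r_def using main[OF B i j] by simp
qed

end
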